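(* Let $G=(V,E,\partial)$ be a finite discrete graph with standard weights ($w_e=1$) and no magnetic potential, let $V_0\subseteq V$ and let $V_1\subsetneq V_0$ be a proper subset. For any two different $s$-partitions $A$ and $B$ of a natural number $r\ge4$, the equilateral metric graphs $\mathcal F_{A,V_1}$ and $\mathcal F_{B,V_1}$ associated with the discrete $V_1$-contracted frame unions $F_{A,V_1}(G,V_0)$ and $F_{B,V_1}(G,V_0)$ are isospectral (for the Kirchhoff Laplacian) and not isomorphic.
   Context: A graph $G=(V,E,\partial)$: finite disjoint sets $V,E$, incidence $\partial e=(\partial_-e,\partial_+e)$, inversion $e\mapsto\bar e$ ($\bar{\bar e}=e$, $\bar e\ne e$, $\partial_\pm\bar e=\partial_\mp e$); loops/multiple edges allowed; every vertex has positive degree. Contraction of vertices along an equivalence relation keeps all edges and replaces vertices by classes. Frame member: $G^a$ is the disjoint union of $a$ copies $G\times\{j\}$; with $(v,i)\sim(v',j)$ iff $(v,i)=(v',j)$ or ($v=v'\in V_0$), $F_a(G,V_0)=G^a/\!\sim$. An $s$-partition of $r$ is a multiset $A=\{\!\{a_1,\dots,a_s\}\!\}$ of natural numbers with sum $r$; $F_A=\bigsqcup_{i=1}^sF_{a_i}(G,V_0)\times\{i\}$, and $F_{A,V_1}$ is obtained from $F_A$ by contracting, for each $v_1\in V_1$, the $s$ vertices $([v_1],i)$ into one vertex. The equilateral metric graph $\mathcal G$ of a discrete graph: choose one edge from each pair $\{e,\bar e\}$, replace it by a copy of $[0,1]$, and glue the endpoints $0,1$ of the copy of $e$ to $\partial_-e,\partial_+e$.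 The Kirchhoff Laplacian acts as $-f_e''$ on each edge, on functions in $H^2$ on each edge that are continuous at every vertex and satisfy $\sum_{e\in E_v}f_e'(0)=0$ (derivatives taken outward from $v$) at every vertex $v$. Isospectral means the eigenvalues agree with multiplicity. *)

theory Defs
  imports Complex_Main "HOL-Library.Multiset"
begin

record ('v, 'e) dgraph =
  gV   :: "'v set"
  gE   :: "'e set"
  gsrc :: "'e \<Rightarrow> 'v"
  gtgt :: "'e \<Rightarrow> 'v"
  ginv :: "'e \<Rightarrow> 'e"

definition is_dgraph :: "('v, 'e) dgraph \<Rightarrow> bool" where
  "is_dgraph G \<longleftrightarrow>
     finite (gV G) \<and> finite (gE G) \<and>
     (\<forall>e\<in>gE G. gsrc G e \<in> gV G \<and> gtgt G e \<in> gV G) \<and>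
     (\<forall>e\<in>gE G. ginv G e \<in> gE G \<and> ginv G (ginv G e) = e \<and> ginv G e \<noteq> e \<and>
                 gsrc G (ginv G e) = gtgt G e \<and> gtgt G (ginv G e) = gsrc G e) \<and>
     (\<forall>v\<in>gV G. \<exists>e\<in>gE G. gsrc G e = v)"

definition contract :: "('v, 'e) dgraph \<Rightarrow> ('v \<times> 'v) set \<Rightarrow> ('v set, 'e) dgraph" where
  "contract G R = \<lparr> gV = gV G // R, gE = gE G,
                    gsrc = (\<lambda>e. R `` {gsrc G e}), gtgt = (\<lambda>e. R `` {gtgt G e}),
                    ginv = ginv G \<rparr>"

definition gpow :: "('v, 'e) dgraph \<Rightarrow> nat \<Rightarrow> ('v \<times> nat, 'e \<times> nat) dgraph" where
  "gpow G a = \<lparr> gV = gV G \<times> {1..a}, gE = gE G \<times> {1..a},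
                gsrc = (\<lambda>(e, j). (gsrc G e, j)), gtgt = (\<lambda>(e, j). (gtgt G e, j)),
                ginv = (\<lambda>(e, j). (ginv G e, j)) \<rparr>"

definition frame_rel :: "('v, 'e) dgraph \<Rightarrow> 'v set \<Rightarrow> nat \<Rightarrow> (('v \<times> nat) \<times> ('v \<times> nat)) set" where
  "frame_rel G V0 a = {((v, i), (v', j)).
      (v, i) \<in> gV G \<times> {1..a} \<and> (v', j) \<in> gV G \<times> {1..a} \<and>
      ((v, i) = (v', j) \<or> (v = v' \<and> v \<in> V0))}"

definition frame :: "('v, 'e) dgraph \<Rightarrow> 'v set \<Rightarrow> nat \<Rightarrow> (('v \<times> nat) set, 'e \<times> nat) dgraph" where
  "frame G V0 a = contract (gpow G a) (frame_rel G V0 a)"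

definition frame_class :: "('v, 'e) dgraph \<Rightarrow> 'v set \<Rightarrow> nat \<Rightarrow> 'v \<Rightarrow> ('v \<times> nat) set" where
  "frame_class G V0 a v = frame_rel G V0 a `` {(v, 1)}"

text \<open>Frame union F_A = disjoint union of F_{a_i}(G,V0) \<times> {i}, i = 1..s, where the
  s-partition A = {{a_1,...,a_s}} is given by an enumeration as = [a_1, ..., a_s].\<close>

definition frame_union :: "('v, 'e) dgraph \<Rightarrow> 'v set \<Rightarrow> nat list
    \<Rightarrow> (('v \<times> nat) set \<times> nat, ('e \<times> nat) \<times> nat) dgraph" where
  "frame_union G V0 as = \<lparr>
     gV = (\<Union>i\<in>{1..length as}. gV (frame G V0 (as ! (i - 1))) \<times> {i}),
     gE = (\<Union>i\<in>{1..length as}. gE (frame G V0 (as ! (i - 1))) \<times> {i}),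
     gsrc = (\<lambda>(e, i). (gsrc (frame G V0 (as ! (i - 1))) e, i)),
     gtgt = (\<lambda>(e, i). (gtgt (frame G V0 (as ! (i - 1))) e, i)),
     ginv = (\<lambda>(e, i). (ginv (frame G V0 (as ! (i - 1))) e, i)) \<rparr>"

definition v1_rel :: "('v, 'e) dgraph \<Rightarrow> 'v set \<Rightarrow> 'v set \<Rightarrow> nat list
    \<Rightarrow> ((('v \<times> nat) set \<times> nat) \<times> (('v \<times> nat) set \<times> nat)) set" where
  "v1_rel G V0 V1 as = {((x, i), (y, k)).
      (x, i) \<in> gV (frame_union G V0 as) \<and> (y, k) \<in> gV (frame_union G V0 as) \<and>
      ((x, i) = (y, k) \<or>
       (\<exists>v1\<in>V1. x = frame_class G V0 (as ! (i - 1)) v1 \<and> y = frame_class G V0 (as ! (k - 1)) v1))}"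

definition frame_union_contr :: "('v, 'e) dgraph \<Rightarrow> 'v set \<Rightarrow> 'v set \<Rightarrow> nat list
    \<Rightarrow> ((('v \<times> nat) set \<times> nat) set, ('e \<times> nat) \<times> nat) dgraph" where
  "frame_union_contr G V0 V1 as = contract (frame_union G V0 as) (v1_rel G V0 V1 as)"

definition is_s_partition :: "nat \<Rightarrow> nat \<Rightarrow> nat list \<Rightarrow> bool" where
  "is_s_partition s r as \<longleftrightarrow> length as = s \<and> sum_list as = r \<and> (\<forall>a\<in>set as. 0 < a)"

text \<open>A function on the equilateral metric graph of G is described by one function
  f e on [0,1] for every oriented edge e, with f (bar e) t = f e (1 - t)
  (so the copy of e is parametrised from \<partial>_- e at 0 to \<partial>_+ e at 1).
  f is an eigenfunction of the Kirchhoff Laplacian for the eigenvalue lam iff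
  -f_e'' = lam f_e on each edge, f is continuous at each vertex, and
  sum_{e \<in> E_v} f_e'(0) = 0 with E_v = {e. \<partial>_- e = v} (outward derivatives).\<close>

definition kirchhoff_eigenfun :: "('v, 'e) dgraph \<Rightarrow> real \<Rightarrow> ('e \<Rightarrow> real \<Rightarrow> real) \<Rightarrow> bool" where
  "kirchhoff_eigenfun G lam f \<longleftrightarrow>
     (\<forall>e\<in>gE G. \<forall>t\<in>{0..1}. f (ginv G e) t = f e (1 - t)) \<and>
     (\<exists>\<phi> :: 'v \<Rightarrow> real. \<forall>e\<in>gE G. f e 0 = \<phi> (gsrc G e) \<and> f e 1 = \<phi> (gtgt G e)) \<and>
     (\<exists>f1 f2 :: 'e \<Rightarrow> real \<Rightarrow> real.
        (\<forall>e\<in>gE G. \<forall>t\<in>{0..1}.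
            (f e has_real_derivative f1 e t) (at t within {0..1}) \<and>
            (f1 e has_real_derivative f2 e t) (at t within {0..1}) \<and>
            - f2 e t = lam * f e t) \<and>
        (\<forall>v\<in>gV G. (\<Sum>e\<in>{e\<in>gE G. gsrc G e = v}. f1 e 0) = 0))"

definition kirchhoff_mult_ge :: "('v, 'e) dgraph \<Rightarrow> real \<Rightarrow> nat \<Rightarrow> bool" where
  "kirchhoff_mult_ge G lam n \<longleftrightarrow>
     (\<exists>fs :: nat \<Rightarrow> 'e \<Rightarrow> real \<Rightarrow> real.
        (\<forall>i<n. kirchhoff_eigenfun G lam (fs i)) \<and>
        (\<forall>c :: nat \<Rightarrow> real.
            (\<forall>e\<in>gE G. \<forall>t\<in>{0..1}. (\<Sum>i<n. c i * fs i e t) = 0) \<longrightarrow> (\<forall>i<n. c i = 0)))"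

definition metric_isospectral :: "('v, 'e) dgraph \<Rightarrow> ('w, 'f) dgraph \<Rightarrow> bool" where
  "metric_isospectral G H \<longleftrightarrow> (\<forall>lam n. kirchhoff_mult_ge G lam n \<longleftrightarrow> kirchhoff_mult_ge H lam n)"

text \<open>Isomorphism of the equilateral metric graphs (all lengths 1): a bijection of
  vertices and of edges preserving incidence and inversion.\<close>

definition metric_graph_iso :: "('v, 'e) dgraph \<Rightarrow> ('w, 'f) dgraph \<Rightarrow> bool" where
  "metric_graph_iso G H \<longleftrightarrow>
     (\<exists>\<phi> \<psi>. bij_betw \<phi> (gV G) (gV H) \<and> bij_betw \<psi> (gE G) (gE H) \<and>
        (\<forall>e\<in>gE G. gsrc H (\<psi> e) = \<phi> (gsrc G e) \<and> gtgt H (\<psi> e) = \<phi> (gtgt G e) \<and>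
                   ginv H (\<psi> e) = \<psi> (ginv G e)))"

end

theory Submission
  imports Defs
begin

definition PP :: "nat list \<Rightarrow> (nat \<times> nat) set" where
  "PP as = {(i, j). i \<in> {1..length as} \<and> j \<in> {1..as ! (i - 1)}}"

definition EE :: "'e \<Rightarrow> nat \<times> nat \<Rightarrow> ('e \<times> nat) \<times> nat" where
  "EE e p = ((e, snd p), fst p)"

definition relV :: "'v set \<Rightarrow> 'v set \<Rightarrow> 'v \<Rightarrow> nat \<times> nat \<Rightarrow> nat \<times> nat \<Rightarrow> bool" where
  "relV V0 V1 u p p' \<longleftrightarrow> (u \<in> V1 \<or> fst p = fst p' \<and> (u \<in> V0 \<or> p = p'))"

lemma EE_inj[simp]: "EE e p = EE e' p' \<longleftrightarrow> e = e' \<and> p = p'"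
  by (cases p; cases p'; auto simp: EE_def)

lemma PP_Sigma: "PP as = Sigma {1..length as} (\<lambda>i. {1..as ! (i - 1)})"
  unfolding PP_def by auto

lemma finite_PP[simp]: "finite (PP as)"
  unfolding PP_Sigma by auto

context
  fixes G :: "('v, 'e) dgraph" and V0 V1 :: "'v set"
  assumes dg: "is_dgraph G" and V0: "V0 \<subseteq> gV G" and V1: "V1 \<subseteq> V0"
begin

lemma equiv_frame_rel: "equiv (gV G \<times> {1..a}) (frame_rel G V0 a)"
  unfolding equiv_def refl_on_def sym_def trans_def frame_rel_def by auto

lemma frame_cls_eq:
  assumes "u \<in> gV G" "u' \<in> gV G" "j \<in> {1..a}" "j' \<in> {1..a}"
  shows "frame_rel G V0 a `` {(u, j)} = frame_rel G V0 a `` {(u', j')} \<longleftrightarrow> u = u' \<and> (u \<in> V0 \<or> j = j')"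
  using eq_equiv_class_iff[OF equiv_frame_rel, of "(u,j)" a "(u',j')"] assms
  by (auto simp: frame_rel_def)

lemma frame_cls_class:
  assumes "u \<in> gV G" "j \<in> {1..a}" "v1 \<in> V0"
  shows "frame_rel G V0 a `` {(u, j)} = frame_class G V0 a v1 \<longleftrightarrow> u = v1"
  unfolding frame_class_def using frame_cls_eq[of u v1 j a 1] assms V0 by auto

lemma gV_FU: "gV (frame_union G V0 as) =
   (\<Union>i\<in>{1..length as}. ((gV G \<times> {1..as ! (i - 1)}) // frame_rel G V0 (as ! (i - 1))) \<times> {i})"
  by (simp add: frame_union_def frame_def contract_def gpow_def)

lemma equiv_v1_rel:
  assumes pos: "\<forall>a\<in>set as. 0 < a"
  shows "equiv (gV (frame_union G V0 as)) (v1_rel G V0 V1 as)"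
proof -
  have uniq: "v1 = v1'" if "(y, k) \<in> gV (frame_union G V0 as)" "v1 \<in> V1" "v1' \<in> V1"
      "y = frame_class G V0 (as ! (k - 1)) v1" "y = frame_class G V0 (as ! (k - 1)) v1'" for y k v1 v1'
  proof -
    have k: "k \<in> {1..length as}" using that(1) by (auto simp: gV_FU)
    then have "as ! (k - 1) > 0" using pos by auto
    then show ?thesis using frame_cls_class[of v1 1 "as ! (k - 1)" v1'] that V1 V0
      unfolding frame_class_def by auto
  qed
  show ?thesis
    unfolding equiv_def refl_on_def sym_def trans_def
  proof (intro conjI allI impI)
    show "v1_rel G V0 V1 as \<subseteq> gV (frame_union G V0 as) \<times> gV (frame_union G V0 as)"
      unfolding v1_rel_def by auto
    show "\<forall>x\<in>gV (frame_union G V0 as). (x, x) \<in> v1_rel G V0 V1 as"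
      unfolding v1_rel_def by auto
    fix x y assume "(x, y) \<in> v1_rel G V0 V1 as"
    then show "(y, x) \<in> v1_rel G V0 V1 as" unfolding v1_rel_def by auto
  next
    fix x y z assume xy: "(x, y) \<in> v1_rel G V0 V1 as" and yz: "(y, z) \<in> v1_rel G V0 V1 as"
    obtain x1 x2 y1 y2 z1 z2 where xyz: "x = (x1, x2)" "y = (y1, y2)" "z = (z1, z2)" by (cases x; cases y; cases z)
    show "(x, z) \<in> v1_rel G V0 V1 as"
      using xy yz uniq[of y1 y2] unfolding xyz v1_rel_def by auto
  qed
qed


lemma gE_FC: "gE (frame_union_contr G V0 V1 as) = (\<lambda>(e, p). EE e p) ` (gE G \<times> PP as)"
  unfolding frame_union_contr_def contract_def frame_union_def frame_def gpow_def PP_def EE_def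
  by (auto simp: image_iff)

lemma src_FC: "gsrc (frame_union_contr G V0 V1 as) (EE e p) =
   v1_rel G V0 V1 as `` {(frame_rel G V0 (as ! (fst p - 1)) `` {(gsrc G e, snd p)}, fst p)}"
  unfolding frame_union_contr_def contract_def frame_union_def frame_def gpow_def EE_def by simp

lemma tgt_FC: "gtgt (frame_union_contr G V0 V1 as) (EE e p) =
   v1_rel G V0 V1 as `` {(frame_rel G V0 (as ! (fst p - 1)) `` {(gtgt G e, snd p)}, fst p)}"
  unfolding frame_union_contr_def contract_def frame_union_def frame_def gpow_def EE_def by simp

lemma inv_FC: "ginv (frame_union_contr G V0 V1 as) (EE e p) = EE (ginv G e) p"
  unfolding frame_union_contr_def contract_def frame_union_def frame_def gpow_def EE_def by simp

lemma vert_in_FU: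
  assumes "u \<in> gV G" "p \<in> PP as"
  shows "(frame_rel G V0 (as ! (fst p - 1)) `` {(u, snd p)}, fst p) \<in> gV (frame_union G V0 as)"
  using assms unfolding gV_FU PP_def by (auto intro!: quotientI)

lemma src_FC_eq:
  assumes pos: "\<forall>a\<in>set as. 0 < a" and e: "e \<in> gE G" "e' \<in> gE G" and p: "p \<in> PP as" "p' \<in> PP as"
  shows "gsrc (frame_union_contr G V0 V1 as) (EE e p) = gsrc (frame_union_contr G V0 V1 as) (EE e' p')
     \<longleftrightarrow> gsrc G e = gsrc G e' \<and> relV V0 V1 (gsrc G e) p p'"
proof -
  define u where "u = gsrc G e"
  define u' where "u' = gsrc G e'"
  have u: "u \<in> gV G" "u' \<in> gV G" using dg e unfolding is_dgraph_def u_def u'_def by auto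
  obtain i j where pij: "p = (i, j)" by (cases p)
  obtain i' j' where pij': "p' = (i', j')" by (cases p')
  have ij: "i \<in> {1..length as}" "j \<in> {1..as ! (i - 1)}" "i' \<in> {1..length as}" "j' \<in> {1..as ! (i' - 1)}"
    using p unfolding pij pij' PP_def by auto
  define c where "c = frame_rel G V0 (as ! (i - 1)) `` {(u, j)}"
  define c' where "c' = frame_rel G V0 (as ! (i' - 1)) `` {(u', j')}"
  define fc where "fc = (\<lambda>k v. frame_class G V0 (as ! (k - 1)) v)"
  have mem: "(c, i) \<in> gV (frame_union G V0 as)" "(c', i') \<in> gV (frame_union G V0 as)"
    using vert_in_FU[OF u(1) p(1)] vert_in_FU[OF u(2) p(2)] unfolding pij pij' c_def c'_def by auto
  have "gsrc (frame_union_contr G V0 V1 as) (EE e p) = gsrc (frame_union_contr G V0 V1 as) (EE e' p')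
     \<longleftrightarrow> ((c, i), (c', i')) \<in> v1_rel G V0 V1 as"
    unfolding src_FC pij pij' fst_conv snd_conv u_def[symmetric] u'_def[symmetric] c_def[symmetric] c'_def[symmetric]
    by (rule eq_equiv_class_iff[OF equiv_v1_rel[OF pos] mem])
  also have "\<dots> \<longleftrightarrow> (i = i' \<and> c = c') \<or> (\<exists>v1\<in>V1. c = fc i v1 \<and> c' = fc i' v1)"
    using mem unfolding v1_rel_def fc_def by auto
  also have "\<dots> \<longleftrightarrow> (i = i' \<and> u = u' \<and> (u \<in> V0 \<or> j = j')) \<or> (u \<in> V1 \<and> u = u')"
  proof -
    have A: "i = i' \<Longrightarrow> c = c' \<longleftrightarrow> u = u' \<and> (u \<in> V0 \<or> j = j')"
      using frame_cls_eq[OF u ij(2)] ij unfolding c_def c'_def by auto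
    have B: "c = fc i v1 \<longleftrightarrow> u = v1" "c' = fc i' v1 \<longleftrightarrow> u' = v1" if "v1 \<in> V1" for v1
      using frame_cls_class[OF u(1) ij(2)] frame_cls_class[OF u(2) ij(4)] that V1
      unfolding c_def c'_def fc_def by auto
    show ?thesis using A B by blast
  qed
  finally show ?thesis unfolding relV_def pij pij' u_def u'_def by auto
qed

lemma src_FC_in:
  assumes "x \<in> gE (frame_union_contr G V0 V1 as)"
  shows "gsrc (frame_union_contr G V0 V1 as) x \<in> gV (frame_union_contr G V0 V1 as)"
proof -
  obtain e p where x: "x = EE e p" "e \<in> gE G" "p \<in> PP as" using assms unfolding gE_FC by auto
  have "gsrc G e \<in> gV G" using dg x unfolding is_dgraph_def by auto
  then show ?thesis unfolding x src_FC
    using vert_in_FU[OF _ x(3)] by (auto simp: frame_union_contr_def contract_def intro!: quotientI)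
qed

lemma src_inv_FC:
  assumes "x \<in> gE (frame_union_contr G V0 V1 as)"
  shows "gsrc (frame_union_contr G V0 V1 as) (ginv (frame_union_contr G V0 V1 as) x) =
         gtgt (frame_union_contr G V0 V1 as) x"
         "ginv (frame_union_contr G V0 V1 as) x \<in> gE (frame_union_contr G V0 V1 as)"
proof -
  obtain e p where x: "x = EE e p" "e \<in> gE G" "p \<in> PP as" using assms unfolding gE_FC by auto
  show "gsrc (frame_union_contr G V0 V1 as) (ginv (frame_union_contr G V0 V1 as) x) =
         gtgt (frame_union_contr G V0 V1 as) x"
    using dg x unfolding x inv_FC src_FC tgt_FC is_dgraph_def by auto
  show "ginv (frame_union_contr G V0 V1 as) x \<in> gE (frame_union_contr G V0 V1 as)"
    using dg x unfolding x inv_FC gE_FC is_dgraph_def by auto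
qed

lemma src_class_FC:
  assumes pos: "\<forall>a\<in>set as. 0 < a" and e0: "e0 \<in> gE G" and p0: "p0 \<in> PP as"
  shows "{y \<in> gE (frame_union_contr G V0 V1 as). gsrc (frame_union_contr G V0 V1 as) y =
                gsrc (frame_union_contr G V0 V1 as) (EE e0 p0)}
     = (\<lambda>(e, p). EE e p) ` ({e \<in> gE G. gsrc G e = gsrc G e0} \<times> {p \<in> PP as. relV V0 V1 (gsrc G e0) p0 p})"
proof (intro equalityI subsetI)
  fix y assume "y \<in> {y \<in> gE (frame_union_contr G V0 V1 as). gsrc (frame_union_contr G V0 V1 as) y =
                gsrc (frame_union_contr G V0 V1 as) (EE e0 p0)}"
  then obtain e p where y: "y = EE e p" "e \<in> gE G" "p \<in> PP as"
    and eq: "gsrc (frame_union_contr G V0 V1 as) (EE e p) = gsrc (frame_union_contr G V0 V1 as) (EE e0 p0)"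
    unfolding gE_FC by auto
  then have "gsrc G e0 = gsrc G e \<and> relV V0 V1 (gsrc G e0) p0 p"
    using src_FC_eq[OF pos e0 y(2) p0 y(3)] by auto
  then show "y \<in> (\<lambda>(e, p). EE e p) ` ({e \<in> gE G. gsrc G e = gsrc G e0} \<times> {p \<in> PP as. relV V0 V1 (gsrc G e0) p0 p})"
    using y by auto
next
  fix y assume "y \<in> (\<lambda>(e, p). EE e p) ` ({e \<in> gE G. gsrc G e = gsrc G e0} \<times> {p \<in> PP as. relV V0 V1 (gsrc G e0) p0 p})"
  then obtain e p where y: "y = EE e p" "e \<in> gE G" "p \<in> PP as" "gsrc G e = gsrc G e0" "relV V0 V1 (gsrc G e0) p0 p"
    by auto
  then have "gsrc (frame_union_contr G V0 V1 as) (EE e0 p0) = gsrc (frame_union_contr G V0 V1 as) (EE e p)"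
    using src_FC_eq[OF pos e0 y(2) p0 y(3)] by auto
  then show "y \<in> {y \<in> gE (frame_union_contr G V0 V1 as). gsrc (frame_union_contr G V0 V1 as) y =
                gsrc (frame_union_contr G V0 V1 as) (EE e0 p0)}"
    using y unfolding gE_FC by auto
qed

end

definition lin_on :: "'p set \<Rightarrow> 'q set \<Rightarrow> (('p \<Rightarrow> real) \<Rightarrow> 'q \<Rightarrow> real) \<Rightarrow> bool" where
  "lin_on P Q T \<longleftrightarrow> (\<exists>M. \<forall>x. \<forall>q\<in>Q. T x q = (\<Sum>p\<in>P. M q p * x p))"

lemma lin_eval: "finite P \<Longrightarrow> (\<And>q. q \<in> Q \<Longrightarrow> g q \<in> P) \<Longrightarrow> lin_on P Q (\<lambda>x q. x (g q))"
  unfolding lin_on_def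
proof (rule exI[of _ "\<lambda>q p. if p = g q then 1 else 0"], intro allI ballI)
  fix x :: "_ \<Rightarrow> real" and q assume "finite P" "\<And>q. q \<in> Q \<Longrightarrow> g q \<in> P" "q \<in> Q"
  have "(\<Sum>p\<in>P. (if p = g q then 1 else 0) * x p) = (\<Sum>p\<in>P. if p = g q then x p else 0)"
    by (rule sum.cong) auto
  also have "\<dots> = x (g q)" using \<open>finite P\<close> \<open>q \<in> Q\<close> \<open>\<And>q. q \<in> Q \<Longrightarrow> g q \<in> P\<close> by (simp add: sum.delta')
  finally show "x (g q) = (\<Sum>p\<in>P. (if p = g q then 1 else 0) * x p)" by simp
qed

lemma lin_add: "lin_on P Q T \<Longrightarrow> lin_on P Q U \<Longrightarrow> lin_on P Q (\<lambda>x q. T x q + U x q)"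
  unfolding lin_on_def
  apply (elim exE)
  subgoal for M N by (rule exI[of _ "\<lambda>q p. M q p + N q p"]) (simp add: algebra_simps sum.distrib)
  done

lemma lin_diff: "lin_on P Q T \<Longrightarrow> lin_on P Q U \<Longrightarrow> lin_on P Q (\<lambda>x q. T x q - U x q)"
  unfolding lin_on_def
  apply (elim exE)
  subgoal for M N by (rule exI[of _ "\<lambda>q p. M q p - N q p"]) (simp add: algebra_simps sum_subtractf)
  done

lemma lin_scale: "lin_on P Q T \<Longrightarrow> lin_on P Q (\<lambda>x q. c q * T x q)"
  unfolding lin_on_def
  apply (elim exE)
  subgoal for M by (rule exI[of _ "\<lambda>q p. c q * M q p"]) (simp add: algebra_simps sum_distrib_left)
  done

lemma lin_div: "lin_on P Q T \<Longrightarrow> lin_on P Q (\<lambda>x q. T x q / c q)"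
  using lin_scale[of P Q T "\<lambda>q. 1 / c q"] by simp

lemma lin_neg: "lin_on P Q T \<Longrightarrow> lin_on P Q (\<lambda>x q. - T x q)"
  using lin_scale[of P Q T "\<lambda>q. - 1"] by simp

lemma lin_comp: "lin_on P Q' T \<Longrightarrow> (\<And>q. q \<in> Q \<Longrightarrow> g q \<in> Q') \<Longrightarrow> lin_on P Q (\<lambda>x q. T x (g q))"
  unfolding lin_on_def
  apply (elim exE)
  subgoal for M by (rule exI[of _ "\<lambda>q p. M (g q) p"]) simp
  done

lemma lin_sum: "lin_on P Q' T \<Longrightarrow> (\<And>q i. q \<in> Q \<Longrightarrow> i \<in> S q \<Longrightarrow> g q i \<in> Q') \<Longrightarrow>
    lin_on P Q (\<lambda>x q. \<Sum>i\<in>S q. T x (g q i))"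
  unfolding lin_on_def
  apply (elim exE)
  subgoal for M
    apply (rule exI[of _ "\<lambda>q p. \<Sum>i\<in>S q. M (g q i) p"])
    apply (simp add: sum_distrib_right)
    apply (intro allI ballI)
    apply (subst sum.swap)
    apply (rule sum.cong; simp)
    done
  done

lemma lin_if: "lin_on P {q\<in>Q. c q} T \<Longrightarrow> lin_on P {q\<in>Q. \<not> c q} U \<Longrightarrow>
    lin_on P Q (\<lambda>x q. if c q then T x q else U x q)"
  unfolding lin_on_def
  apply (elim exE)
  subgoal for M N by (rule exI[of _ "\<lambda>q p. if c q then M q p else N q p"]) simp
  done

lemma lin_tot: "lin_on P Q (\<lambda>x q. \<Sum>p\<in>P. x p)"
  unfolding lin_on_def by (rule exI[of _ "\<lambda>q p. 1"]) simp

definition NN :: "nat list \<Rightarrow> (nat \<times> nat) set" where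
  "NN as = {(i, j). i \<in> {1..length as} \<and> j \<in> {1..<as ! (i - 1)}}"

definition Hc :: "nat list \<Rightarrow> (nat \<times> nat \<Rightarrow> real) \<Rightarrow> real" where
  "Hc A x = (\<Sum>p\<in>PP A. x p) / real (sum_list A)"

definition bsum :: "nat list \<Rightarrow> (nat \<times> nat \<Rightarrow> real) \<Rightarrow> nat \<Rightarrow> real" where
  "bsum A x l = (\<Sum>j\<in>{1..A ! (l - 1)}. x (l, j))"

definition kc :: "nat list \<Rightarrow> (nat \<times> nat \<Rightarrow> real) \<Rightarrow> nat \<Rightarrow> real" where
  "kc A x l = bsum A x l / real (A ! (l - 1)) - Hc A x"

definition dc :: "nat list \<Rightarrow> (nat \<times> nat \<Rightarrow> real) \<Rightarrow> nat \<times> nat \<Rightarrow> real" where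
  "dc A x p = x p - bsum A x (fst p) / real (A ! (fst p - 1))"

definition Tm :: "nat list \<Rightarrow> nat list \<Rightarrow> (nat \<times> nat \<Rightarrow> nat \<times> nat) \<Rightarrow> (nat \<times> nat \<Rightarrow> real) \<Rightarrow> nat \<times> nat \<Rightarrow> real" where
  "Tm A B \<sigma> x q = Hc A x + real (A ! (fst q - 1)) / real (B ! (fst q - 1)) * kc A x (fst q)
     + (if snd q < B ! (fst q - 1) then dc A x (\<sigma> q)
        else - (\<Sum>k\<in>{1..<B ! (fst q - 1)}. dc A x (\<sigma> (fst q, k))))"

lemma NN_sub: "NN A \<subseteq> PP A"
  unfolding NN_def PP_def by auto

lemma sum_PP: "(\<Sum>p\<in>PP A. F p) = (\<Sum>i\<in>{1..length A}. \<Sum>j\<in>{1..A ! (i - 1)}. F (i, j))"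
  unfolding PP_Sigma by (subst sum.Sigma) auto

lemma sum_block: assumes "l \<in> {1..length A}"
  shows "(\<Sum>p\<in>{p \<in> PP A. fst p = l}. F p) = (\<Sum>j\<in>{1..A ! (l - 1)}. F (l, j))"
proof -
  have "{p \<in> PP A. fst p = l} = (\<lambda>j. (l, j)) ` {1..A ! (l - 1)}"
    using assms unfolding PP_def by auto
  then show ?thesis by (simp add: sum.reindex inj_on_def)
qed

lemma sum_list_nth: "(\<Sum>i\<in>{1..length A}. f (A ! (i - 1))) = sum_list (map f A)"
proof -
  have "(\<Sum>i\<in>{1..length A}. f (A ! (i - 1))) = (\<Sum>i\<in>{0..<length A}. f (A ! i))"
    by (rule sum.reindex_bij_witness[of _ "\<lambda>i. i + 1" "\<lambda>i. i - 1"]) auto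
  also have "\<dots> = sum_list (map f A)"
    by (simp add: sum_list_sum_nth)
  finally show ?thesis .
qed

lemma card_PP: "card (PP A) = sum_list A"
proof -
  have "card (PP A) = (\<Sum>p\<in>PP A. 1)" by (rule card_eq_sum)
  also have "\<dots> = (\<Sum>i\<in>{1..length A}. \<Sum>j\<in>{1..A ! (i - 1)}. 1)" by (rule sum_PP)
  also have "\<dots> = (\<Sum>i\<in>{1..length A}. A ! (i - 1))" by simp
  also have "\<dots> = sum_list (map (\<lambda>a. a) A)" by (rule sum_list_nth[where f="\<lambda>a. a"])
  finally show ?thesis by simp
qed

lemma card_NN: assumes "\<forall>a\<in>set A. 0 < a" shows "card (NN A) + length A = sum_list A"
proof -
  have "NN A = Sigma {1..length A} (\<lambda>i. {1..<A ! (i - 1)})" unfolding NN_def by auto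
  then have "card (NN A) = (\<Sum>i\<in>{1..length A}. A ! (i - 1) - 1)" by simp
  also have "\<dots> = sum_list (map (\<lambda>a. a - 1) A)" by (rule sum_list_nth[where f="\<lambda>a. a - 1"])
  finally have c: "card (NN A) = sum_list (map (\<lambda>a. a - 1) A)" .
  have "sum_list (map (\<lambda>a. a - 1) A) + length A = sum_list A"
    using assms by (induct A) auto
  with c show ?thesis by linarith
qed


definition condC :: "'v set \<Rightarrow> 'v set \<Rightarrow> nat list \<Rightarrow> nat list \<Rightarrow> ((nat \<times> nat \<Rightarrow> real) \<Rightarrow> nat \<times> nat \<Rightarrow> real) \<Rightarrow> bool" where
  "condC V0 V1 A B T \<longleftrightarrow> (\<forall>u X. (\<forall>p\<in>PP A. \<forall>p'\<in>PP A. relV V0 V1 u p p' \<longrightarrow> X p = X p') \<longrightarrow>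
      (\<forall>q\<in>PP B. \<forall>q'\<in>PP B. relV V0 V1 u q q' \<longrightarrow> T X q = T X q'))"

definition condK :: "'v set \<Rightarrow> 'v set \<Rightarrow> nat list \<Rightarrow> nat list \<Rightarrow> ((nat \<times> nat \<Rightarrow> real) \<Rightarrow> nat \<times> nat \<Rightarrow> real) \<Rightarrow> bool" where
  "condK V0 V1 A B T \<longleftrightarrow> (\<forall>u Y. (\<forall>p\<in>PP A. (\<Sum>p'\<in>{p' \<in> PP A. relV V0 V1 u p p'}. Y p') = 0) \<longrightarrow>
      (\<forall>q\<in>PP B. (\<Sum>q'\<in>{q' \<in> PP B. relV V0 V1 u q q'}. T Y q') = 0))"

definition condI :: "nat list \<Rightarrow> nat list \<Rightarrow> ((nat \<times> nat \<Rightarrow> real) \<Rightarrow> nat \<times> nat \<Rightarrow> real) \<Rightarrow> bool" where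
  "condI A B T \<longleftrightarrow> (\<forall>X. (\<forall>q\<in>PP B. T X q = 0) \<longrightarrow> (\<forall>p\<in>PP A. X p = 0))"

lemma aux_div: "(c::real) \<noteq> 0 \<Longrightarrow> t - c * (t / c) = 0"
  by simp

lemma cond_cong:
  assumes "\<And>X q. q \<in> PP B \<Longrightarrow> T X q = T' X q"
  shows "condC V0 V1 A B T \<Longrightarrow> condC V0 V1 A B T'" "condK V0 V1 A B T \<Longrightarrow> condK V0 V1 A B T'"
    "condI A B T \<Longrightarrow> condI A B T'"
proof -
  have S: "sum (T' Y) {q' \<in> PP B. P q'} = sum (T Y) {q' \<in> PP B. P q'}" for Y P
    by (rule sum.cong) (auto simp: assms)
  show "condC V0 V1 A B T \<Longrightarrow> condC V0 V1 A B T'" unfolding condC_def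
  proof (intro allI impI ballI)
    fix u and X :: "nat \<times> nat \<Rightarrow> real" and q q'
    assume H: "\<forall>u X. (\<forall>p\<in>PP A. \<forall>p'\<in>PP A. relV V0 V1 u p p' \<longrightarrow> X p = X p') \<longrightarrow>
               (\<forall>q\<in>PP B. \<forall>q'\<in>PP B. relV V0 V1 u q q' \<longrightarrow> T X q = T X q')"
      and h: "\<forall>p\<in>PP A. \<forall>p'\<in>PP A. relV V0 V1 u p p' \<longrightarrow> X p = X p'"
      and q: "q \<in> PP B" "q' \<in> PP B" "relV V0 V1 u q q'"
    have "T X q = T X q'" using H h q by blast
    then show "T' X q = T' X q'" using assms q by simp
  qed
  show "condK V0 V1 A B T \<Longrightarrow> condK V0 V1 A B T'" unfolding condK_def S by blast
  show "condI A B T \<Longrightarrow> condI A B T'" unfolding condI_def using assms by simp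
qed

context
  fixes A B :: "nat list" and \<sigma> :: "nat \<times> nat \<Rightarrow> nat \<times> nat"
  assumes len: "length B = length A" and sums: "sum_list B = sum_list A"
    and posA: "\<forall>a\<in>set A. 0 < a" and posB: "\<forall>a\<in>set B. 0 < a"
    and rpos: "sum_list A > 0" and \<sigma>: "bij_betw \<sigma> (NN B) (NN A)"
begin

lemma apos: assumes "l \<in> {1..length A}" shows "A ! (l - 1) > 0"
proof -
  have "A ! (l - 1) \<in> set A" by (rule nth_mem) (use assms in auto)
  then show ?thesis using posA by blast
qed

lemma bpos: assumes "l \<in> {1..length A}" shows "B ! (l - 1) > 0"
proof -
  have "B ! (l - 1) \<in> set B" by (rule nth_mem) (use assms len in auto)
  then show ?thesis using posB by blast
qed

lemma PP_A_in: "l \<in> {1..length A} \<Longrightarrow> j \<in> {1..A ! (l - 1)} \<Longrightarrow> (l, j) \<in> PP A"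
  unfolding PP_def by auto

lemma PP_fst: "p \<in> PP A \<Longrightarrow> fst p \<in> {1..length A}" "q \<in> PP B \<Longrightarrow> fst q \<in> {1..length A}"
  unfolding PP_def using len by auto

lemma sigma_in: "q \<in> NN B \<Longrightarrow> \<sigma> q \<in> PP A"
  using \<sigma> NN_sub unfolding bij_betw_def by auto

lemma E1: "x p = Hc A x + kc A x (fst p) + dc A x p"
  unfolding kc_def dc_def by simp

lemma E2: assumes "l \<in> {1..length A}" shows "(\<Sum>j\<in>{1..A ! (l - 1)}. dc A x (l, j)) = 0"
proof -
  have "(\<Sum>j\<in>{1..A ! (l - 1)}. dc A x (l, j)) = bsum A x l - real (A ! (l - 1)) * (bsum A x l / real (A ! (l - 1)))"
    unfolding dc_def by (simp add: sum_subtractf bsum_def)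
  also have "\<dots> = 0" using apos[OF assms] by simp
  finally show ?thesis .
qed

lemma tot_bsum: "(\<Sum>p\<in>PP A. x p) = (\<Sum>l\<in>{1..length A}. bsum A x l)"
  unfolding sum_PP bsum_def ..

lemma sumA: "(\<Sum>l\<in>{1..length A}. real (A ! (l - 1))) = real (sum_list A)"
  using sum_list_nth[where f="\<lambda>a. real a" and A=A] by (simp add: sum_list_of_nat)

lemma sumB: "(\<Sum>l\<in>{1..length A}. real (B ! (l - 1))) = real (sum_list A)"
  using sum_list_nth[where f="\<lambda>a. real a" and A=B] len sums by (simp add: sum_list_of_nat)

lemma E3: "(\<Sum>l\<in>{1..length A}. real (A ! (l - 1)) * kc A x l) = 0"
proof -
  have "(\<Sum>l\<in>{1..length A}. real (A ! (l - 1)) * kc A x l)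
      = (\<Sum>l\<in>{1..length A}. bsum A x l - real (A ! (l - 1)) * Hc A x)"
    apply (rule sum.cong[OF refl])
    subgoal for l using apos[of l] by (simp add: kc_def algebra_simps)
    done
  also have "\<dots> = (\<Sum>l\<in>{1..length A}. bsum A x l) - (\<Sum>l\<in>{1..length A}. real (A ! (l - 1)) * Hc A x)"
    by (rule sum_subtractf)
  also have "(\<Sum>l\<in>{1..length A}. real (A ! (l - 1)) * Hc A x) = (\<Sum>l\<in>{1..length A}. real (A ! (l - 1))) * Hc A x"
    by (rule sum_distrib_right[symmetric])
  also have "(\<Sum>l\<in>{1..length A}. bsum A x l) = (\<Sum>p\<in>PP A. x p)"
    by (rule tot_bsum[symmetric])
  also note sumA
  also have "(\<Sum>p\<in>PP A. x p) - real (sum_list A) * Hc A x = 0"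
    unfolding Hc_def by (rule aux_div) (use rpos in linarith)
  finally show ?thesis .
qed

lemma E4: assumes l: "l \<in> {1..length A}"
  shows "(\<Sum>k\<in>{1..B ! (l - 1)}. Tm A B \<sigma> x (l, k)) = real (B ! (l - 1)) * Hc A x + real (A ! (l - 1)) * kc A x l"
proof -
  define b where "b = B ! (l - 1)"
  have b: "b > 0" using bpos[OF l] by (simp add: b_def)
  define D where "D = (\<lambda>k. if k < b then dc A x (\<sigma> (l, k)) else - (\<Sum>k\<in>{1..<b}. dc A x (\<sigma> (l, k))))"
  have T: "Tm A B \<sigma> x (l, k) = Hc A x + real (A ! (l - 1)) / real b * kc A x l + D k" for k
    unfolding Tm_def D_def b_def by simp
  have "{1..b} = insert b {1..<b}" using b by auto
  then have "(\<Sum>k\<in>{1..b}. D k) = D b + (\<Sum>k\<in>{1..<b}. D k)" by simp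
  also have "(\<Sum>k\<in>{1..<b}. D k) = (\<Sum>k\<in>{1..<b}. dc A x (\<sigma> (l, k)))"
    by (rule sum.cong) (auto simp: D_def)
  finally have D0: "(\<Sum>k\<in>{1..b}. D k) = 0" by (simp add: D_def)
  have "(\<Sum>k\<in>{1..b}. Tm A B \<sigma> x (l, k)) = (\<Sum>k\<in>{1..b}. Hc A x + real (A ! (l - 1)) / real b * kc A x l) + (\<Sum>k\<in>{1..b}. D k)"
    unfolding T by (simp add: sum.distrib)
  also have "\<dots> = real b * (Hc A x + real (A ! (l - 1)) / real b * kc A x l)"
    using D0 by simp
  also have "\<dots> = real b * Hc A x + real (A ! (l - 1)) * kc A x l"
    using b by (simp add: distrib_left)
  finally show ?thesis by (simp add: b_def)
qed

lemma E5: "(\<Sum>q\<in>PP B. Tm A B \<sigma> x q) = real (sum_list A) * Hc A x"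
proof -
  have "(\<Sum>q\<in>PP B. Tm A B \<sigma> x q) = (\<Sum>l\<in>{1..length A}. real (B ! (l - 1)) * Hc A x + real (A ! (l - 1)) * kc A x l)"
    unfolding sum_PP len by (rule sum.cong[OF refl], rule E4, assumption)
  also have "\<dots> = real (sum_list A) * Hc A x"
    unfolding sum.distrib sum_distrib_right[symmetric] sumB E3 by simp
  finally show ?thesis .
qed

lemma lin_Tm: "lin_on (PP A) (PP B) (Tm A B \<sigma>)"
proof -
  have LH: "lin_on (PP A) Q (\<lambda>x q. Hc A x)" for Q :: "'q set"
    unfolding Hc_def by (rule lin_div[OF lin_tot])
  have Lid: "lin_on (PP A) (PP A) (\<lambda>x q. x q)"
    using lin_eval[of "PP A" "PP A" "\<lambda>q. q"] by simp
  have Lb: "lin_on (PP A) {1..length A} (bsum A)"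
    unfolding bsum_def
    by (rule lin_sum[OF Lid]) (auto intro: PP_A_in)
  have Lk: "lin_on (PP A) {1..length A} (kc A)"
    unfolding kc_def by (rule lin_diff[OF lin_div[OF Lb] LH])
  have Lb2: "lin_on (PP A) (PP A) (\<lambda>x p. bsum A x (fst p))"
    by (rule lin_comp[OF Lb]) (rule PP_fst)
  have Ld: "lin_on (PP A) (PP A) (dc A)"
    unfolding dc_def by (rule lin_diff[OF Lid lin_div[OF Lb2]])
  have Lk2: "lin_on (PP A) (PP B) (\<lambda>x q. kc A x (fst q))"
    by (rule lin_comp[OF Lk]) (rule PP_fst)
  have Lif1: "lin_on (PP A) {q \<in> PP B. snd q < B ! (fst q - 1)} (\<lambda>x q. dc A x (\<sigma> q))"
    by (rule lin_comp[OF Ld]) (rule sigma_in, auto simp: NN_def PP_def)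
  have Lif2: "lin_on (PP A) {q \<in> PP B. \<not> snd q < B ! (fst q - 1)}
      (\<lambda>x q. - (\<Sum>k\<in>{1..<B ! (fst q - 1)}. dc A x (\<sigma> (fst q, k))))"
    by (rule lin_neg[OF lin_sum[OF Ld]]) (rule sigma_in, auto simp: NN_def PP_def)
  have "lin_on (PP A) (PP B) (\<lambda>x q. Hc A x + real (A ! (fst q - 1)) / real (B ! (fst q - 1)) * kc A x (fst q)
     + (if snd q < B ! (fst q - 1) then dc A x (\<sigma> q)
        else - (\<Sum>k\<in>{1..<B ! (fst q - 1)}. dc A x (\<sigma> (fst q, k)))))"
    by (rule lin_add[OF lin_add[OF LH lin_scale[OF Lk2]] lin_if[OF Lif1 Lif2]])
  then show ?thesis unfolding Tm_def[abs_def] .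
qed


lemma notall0: "\<not> (\<forall>n\<in>set A. n = 0)"
proof
  assume H: "\<forall>n\<in>set A. n = 0"
  have "sum_list A = 0" using H by (induct A) auto
  with rpos show False by linarith
qed

lemma one_in: "(1, 1) \<in> PP A"
proof -
  have L: "Suc 0 \<le> length A" using rpos by (cases A) auto
  have a: "0 < A ! 0" using apos[of 1] L by simp
  show ?thesis unfolding PP_def using L a by auto
qed

lemma dc_blockconst:
  assumes c: "\<forall>p\<in>PP A. X p = c (fst p)" and p: "p \<in> PP A"
  shows "dc A X p = 0"
proof -
  obtain l j where pl: "p = (l, j)" by (cases p)
  have l: "l \<in> {1..length A}" using p pl PP_fst by fastforce
  have "bsum A X l = (\<Sum>j\<in>{1..A ! (l - 1)}. c l)"
    unfolding bsum_def by (rule sum.cong[OF refl]) (use c PP_A_in[OF l] in auto)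
  also have "\<dots> = real (A ! (l - 1)) * c l" by simp
  finally show ?thesis unfolding dc_def pl using c p pl apos[OF l] by simp
qed

lemma Tm_blockconst:
  assumes c: "\<forall>p\<in>PP A. X p = c (fst p)" and q: "q \<in> PP B"
  shows "Tm A B \<sigma> X q = Hc A X + real (A ! (fst q - 1)) / real (B ! (fst q - 1)) * kc A X (fst q)"
proof -
  have "(if snd q < B ! (fst q - 1) then dc A X (\<sigma> q)
        else - (\<Sum>k\<in>{1..<B ! (fst q - 1)}. dc A X (\<sigma> (fst q, k)))) = 0"
  proof (cases "snd q < B ! (fst q - 1)")
    case True
    then have "q \<in> NN B" using q unfolding NN_def PP_def by auto
    then show ?thesis using True dc_blockconst[OF c sigma_in] by simp
  next
    case False
    have "(\<Sum>k\<in>{1..<B ! (fst q - 1)}. dc A X (\<sigma> (fst q, k))) = 0"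
    proof (rule sum.neutral, rule ballI)
      fix k assume "k \<in> {1..<B ! (fst q - 1)}"
      then have "(fst q, k) \<in> NN B" using q unfolding NN_def PP_def by auto
      then show "dc A X (\<sigma> (fst q, k)) = 0" using dc_blockconst[OF c sigma_in] by simp
    qed
    then show ?thesis using False by simp
  qed
  then show ?thesis unfolding Tm_def by simp
qed

lemma const_H:
  assumes c: "\<forall>p\<in>PP A. X p = c0"
  shows "Hc A X = c0" "\<And>l. l \<in> {1..length A} \<Longrightarrow> kc A X l = 0"
proof -
  have "(\<Sum>p\<in>PP A. X p) = (\<Sum>p\<in>PP A. c0)" by (rule sum.cong) (use c in auto)
  also have "\<dots> = real (sum_list A) * c0" by (simp add: card_PP)
  finally show H: "Hc A X = c0" unfolding Hc_def using notall0 by simp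
  fix l assume l: "l \<in> {1..length A}"
  have "bsum A X l = (\<Sum>j\<in>{1..A ! (l - 1)}. c0)"
    unfolding bsum_def by (rule sum.cong[OF refl]) (use c PP_A_in[OF l] in auto)
  also have "\<dots> = real (A ! (l - 1)) * c0" by simp
  finally show "kc A X l = 0" unfolding kc_def H using apos[OF l] by simp
qed

lemma condC_Tm: "condC V0 V1 A B (Tm A B \<sigma>)"
  unfolding condC_def
proof (intro allI impI ballI)
  fix u and X :: "nat \<times> nat \<Rightarrow> real" and q q'
  assume h: "\<forall>p\<in>PP A. \<forall>p'\<in>PP A. relV V0 V1 u p p' \<longrightarrow> X p = X p'"
    and q: "q \<in> PP B" "q' \<in> PP B" and r: "relV V0 V1 u q q'"
  show "Tm A B \<sigma> X q = Tm A B \<sigma> X q'"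
  proof (cases "u \<in> V1")
    case True
    have rr: "relV V0 V1 u p p'" for p p' using True by (simp add: relV_def)
    have c0: "\<forall>p\<in>PP A. X p = X (1, 1)" using h one_in rr by blast
    then have c: "\<forall>p\<in>PP A. X p = (\<lambda>_. X (1, 1)) (fst p)" by blast
    have K: "kc A X l = 0" if "l \<in> {1..length A}" for l using const_H(2)[OF c0 that] .
    show ?thesis
      by (simp only: Tm_blockconst[OF c q(1)] Tm_blockconst[OF c q(2)] K[OF PP_fst(2)[OF q(1)]]
          K[OF PP_fst(2)[OF q(2)]] mult_zero_right add_0_right)
  next
    case nV1: False
    show ?thesis
    proof (cases "u \<in> V0")
      case True
      have c: "\<forall>p\<in>PP A. X p = (\<lambda>l. X (l, 1)) (fst p)"
      proof
        fix p assume p: "p \<in> PP A"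
        have "(fst p, 1) \<in> PP A" using p apos[OF PP_fst(1)[OF p]] PP_fst(1)[OF p] unfolding PP_def by auto
        moreover have "relV V0 V1 u p (fst p, 1)" using True by (simp add: relV_def)
        ultimately show "X p = (\<lambda>l. X (l, 1)) (fst p)" using h p by blast
      qed
      have "fst q = fst q'" using r nV1 by (simp add: relV_def)
      then show ?thesis using Tm_blockconst[OF c q(1)] Tm_blockconst[OF c q(2)] by simp
    next
      case False
      then have "q = q'" using r nV1 by (simp add: relV_def)
      then show ?thesis by simp
    qed
  qed
qed

lemma zero_H:
  assumes b: "\<And>l. l \<in> {1..length A} \<Longrightarrow> bsum A Y l = 0"
  shows "Hc A Y = 0" "\<And>l. l \<in> {1..length A} \<Longrightarrow> kc A Y l = 0"
proof -
  have "(\<Sum>l\<in>{1..length A}. bsum A Y l) = 0" by (rule sum.neutral) (use b in auto)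
  then show H: "Hc A Y = 0" unfolding Hc_def tot_bsum by simp
  fix l assume "l \<in> {1..length A}"
  then show "kc A Y l = 0" unfolding kc_def H using b by simp
qed

lemma condK_Tm: "condK V0 V1 A B (Tm A B \<sigma>)"
  unfolding condK_def
proof (intro allI impI ballI)
  fix u and Y :: "nat \<times> nat \<Rightarrow> real" and q
  assume h: "\<forall>p\<in>PP A. (\<Sum>p'\<in>{p' \<in> PP A. relV V0 V1 u p p'}. Y p') = 0" and q: "q \<in> PP B"
  show "(\<Sum>q'\<in>{q' \<in> PP B. relV V0 V1 u q q'}. Tm A B \<sigma> Y q') = 0"
  proof (cases "u \<in> V1")
    case True
    have "(\<Sum>p'\<in>PP A. Y p') = 0" using h[rule_format, OF one_in] True by (simp add: relV_def)
    then have H: "Hc A Y = 0" unfolding Hc_def by simp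
    have "{q' \<in> PP B. relV V0 V1 u q q'} = PP B" using True by (auto simp: relV_def)
    then show ?thesis using E5[of Y] H by simp
  next
    case nV1: False
    show ?thesis
    proof (cases "u \<in> V0")
      case True
      have b: "bsum A Y l = 0" if l: "l \<in> {1..length A}" for l
      proof -
        have l1: "(l, 1) \<in> PP A" using l apos[OF l] unfolding PP_def by auto
        have "{p' \<in> PP A. relV V0 V1 u (l, 1) p'} = {p' \<in> PP A. fst p' = l}"
          using True nV1 by (auto simp: relV_def)
        then have "(\<Sum>p'\<in>{p' \<in> PP A. fst p' = l}. Y p') = 0" using h[rule_format, OF l1] by simp
        then show ?thesis unfolding bsum_def sum_block[OF l] .
      qed
      have l: "fst q \<in> {1..length A}" using PP_fst(2)[OF q] .
      have lB: "fst q \<in> {1..length B}" using l len by simp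
      have "{q' \<in> PP B. relV V0 V1 u q q'} = {q' \<in> PP B. fst q' = fst q}"
        using True nV1 by (auto simp: relV_def)
      then have "(\<Sum>q'\<in>{q' \<in> PP B. relV V0 V1 u q q'}. Tm A B \<sigma> Y q') =
          (\<Sum>k\<in>{1..B ! (fst q - 1)}. Tm A B \<sigma> Y (fst q, k))"
        using sum_block[OF lB] by simp
      also have "\<dots> = 0" unfolding E4[OF l] using zero_H[OF b] l by simp
      finally show ?thesis .
    next
      case False
      have Y0: "Y p = 0" if p: "p \<in> PP A" for p
      proof -
        have "{p' \<in> PP A. relV V0 V1 u p p'} = {p}" using False nV1 p by (auto simp: relV_def)
        then show ?thesis using h p by auto
      qed
      obtain M where M: "\<And>x q. q \<in> PP B \<Longrightarrow> Tm A B \<sigma> x q = (\<Sum>p\<in>PP A. M q p * x p)"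
        using lin_Tm unfolding lin_on_def by blast
      have "Tm A B \<sigma> Y q' = 0" if "q' \<in> PP B" for q'
        unfolding M[OF that] by (rule sum.neutral) (simp add: Y0)
      then show ?thesis by (intro sum.neutral) auto
    qed
  qed
qed

lemma condI_Tm: "condI A B (Tm A B \<sigma>)"
  unfolding condI_def
proof (intro allI impI ballI)
  fix X :: "nat \<times> nat \<Rightarrow> real" and p
  assume z: "\<forall>q\<in>PP B. Tm A B \<sigma> X q = 0" and p: "p \<in> PP A"
  have "real (sum_list A) * Hc A X = 0" using E5[of X] z by simp
  then have H: "Hc A X = 0" using notall0 by simp
  have K: "kc A X l = 0" if l: "l \<in> {1..length A}" for l
  proof -
    have lB: "l \<in> {1..length B}" using l len by simp
    have "(\<Sum>k\<in>{1..B ! (l - 1)}. Tm A B \<sigma> X (l, k)) = 0"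
      by (rule sum.neutral) (use z lB in \<open>auto simp: PP_def\<close>)
    then have "real (A ! (l - 1)) * kc A X l = 0" using E4[OF l] H by simp
    then show ?thesis using apos[OF l] by simp
  qed
  have DN: "dc A X p' = 0" if p': "p' \<in> NN A" for p'
  proof -
    obtain q where q: "q \<in> NN B" "p' = \<sigma> q" using p' bij_betw_imp_surj_on[OF \<sigma>] by blast
    have qB: "q \<in> PP B" "snd q < B ! (fst q - 1)" using q(1) unfolding NN_def PP_def by auto
    have "Tm A B \<sigma> X q = dc A X (\<sigma> q)" unfolding Tm_def using H K PP_fst(2)[OF qB(1)] qB(2) by simp
    then show ?thesis using z qB(1) q(2) by simp
  qed
  have DP: "dc A X p = 0"
  proof -
    obtain l j where pl: "p = (l, j)" by (cases p)
    have l: "l \<in> {1..length A}" and j: "j \<in> {1..A ! (l - 1)}" using p pl unfolding PP_def by auto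
    show ?thesis
    proof (cases "j < A ! (l - 1)")
      case True
      then show ?thesis using DN[of p] pl l j unfolding NN_def by auto
    next
      case False
      then have ja: "j = A ! (l - 1)" using j by auto
      have "{1..A ! (l - 1)} = insert j {1..<A ! (l - 1)}" using ja apos[OF l] by auto
      then have "0 = dc A X (l, j) + (\<Sum>j'\<in>{1..<A ! (l - 1)}. dc A X (l, j'))"
        using E2[OF l, of X] ja by simp
      also have "(\<Sum>j'\<in>{1..<A ! (l - 1)}. dc A X (l, j')) = 0"
        by (rule sum.neutral) (use DN l in \<open>auto simp: NN_def\<close>)
      finally show ?thesis using pl by simp
    qed
  qed
  show "X p = 0" using E1[of X p] H K[OF PP_fst(1)[OF p]] DP by simp
qed

lemma exists_M:
  "\<exists>M. condC V0 V1 A B (\<lambda>X q. \<Sum>p\<in>PP A. M q p * X p) \<and> condK V0 V1 A B (\<lambda>X q. \<Sum>p\<in>PP A. M q p * X p)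
     \<and> condI A B (\<lambda>X q. \<Sum>p\<in>PP A. M q p * X p)"
proof -
  obtain M where M: "\<And>x q. q \<in> PP B \<Longrightarrow> Tm A B \<sigma> x q = (\<Sum>p\<in>PP A. M q p * x p)"
    using lin_Tm unfolding lin_on_def by blast
  show ?thesis
    by (rule exI[of _ M]) (use cond_cong[where T="Tm A B \<sigma>" and T'="\<lambda>X q. \<Sum>p\<in>PP A. M q p * X p", OF M]
       condC_Tm condK_Tm condI_Tm in blast)
qed

end


lemma cont_lemma:
  fixes f :: "'x \<Rightarrow> real \<Rightarrow> real"
  assumes inv: "\<forall>x\<in>E. \<forall>t\<in>{0..1}. f (iv x) t = f x (1 - t)"
    and ivE: "\<And>x. x \<in> E \<Longrightarrow> iv x \<in> E"
    and st: "\<And>x. x \<in> E \<Longrightarrow> src (iv x) = tgt x"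
    and c: "\<And>x y. x \<in> E \<Longrightarrow> y \<in> E \<Longrightarrow> src x = src y \<Longrightarrow> f x 0 = f y 0"
  shows "\<exists>\<phi> :: 'v \<Rightarrow> real. \<forall>x\<in>E. f x 0 = \<phi> (src x) \<and> f x 1 = \<phi> (tgt x)"
proof (rule exI[of _ "\<lambda>v. f (SOME x. x \<in> E \<and> src x = v) 0"], intro ballI conjI)
  have P: "f x 0 = f (SOME y. y \<in> E \<and> src y = src x) 0" if "x \<in> E" for x
  proof -
    have S: "(SOME y. y \<in> E \<and> src y = src x) \<in> E \<and> src (SOME y. y \<in> E \<and> src y = src x) = src x"
      by (rule someI[of _ x]) (use that in simp)
    show ?thesis using c[OF that conjunct1[OF S] conjunct2[OF S, symmetric]] .
  qed
  fix x assume x: "x \<in> E"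
  show "f x 0 = f (SOME y. y \<in> E \<and> src y = src x) 0" using P[OF x] .
  have "f x 1 = f (iv x) 0" using inv[rule_format, OF x, of 0] by simp
  also have "\<dots> = f (SOME y. y \<in> E \<and> src y = src (iv x)) 0" using P[OF ivE[OF x]] .
  finally show "f x 1 = f (SOME y. y \<in> E \<and> src y = tgt x) 0" using st[OF x] by simp
qed

context
  fixes G :: "('v, 'e) dgraph" and V0 V1 :: "'v set"
  assumes dg: "is_dgraph G" and V0: "V0 \<subseteq> gV G" and V1: "V1 \<subseteq> V0"
begin

lemma relV_refl: "relV V0 V1 u p p"
  by (simp add: relV_def)

lemma sum_src_class:
  assumes pos: "\<forall>a\<in>set L. 0 < a" and e0: "e0 \<in> gE G" and p0: "p0 \<in> PP L"
  shows "(\<Sum>y\<in>{y \<in> gE (frame_union_contr G V0 V1 L). gsrc (frame_union_contr G V0 V1 L) y =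
                gsrc (frame_union_contr G V0 V1 L) (EE e0 p0)}. F y)
    = (\<Sum>p'\<in>{p' \<in> PP L. relV V0 V1 (gsrc G e0) p0 p'}. \<Sum>e'\<in>{e \<in> gE G. gsrc G e = gsrc G e0}. F (EE e' p'))"
proof -
  have inj: "inj_on (\<lambda>(e, p). EE e p) X" for X by (auto simp: inj_on_def)
  have "(\<Sum>y\<in>{y \<in> gE (frame_union_contr G V0 V1 L). gsrc (frame_union_contr G V0 V1 L) y =
                gsrc (frame_union_contr G V0 V1 L) (EE e0 p0)}. F y)
     = (\<Sum>y\<in>({e \<in> gE G. gsrc G e = gsrc G e0} \<times> {p \<in> PP L. relV V0 V1 (gsrc G e0) p0 p}). F (case y of (e, p) \<Rightarrow> EE e p))"
    unfolding src_class_FC[OF dg V0 V1 pos e0 p0] by (subst sum.reindex[OF inj]) (simp add: comp_def)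
  also have "\<dots> = (\<Sum>e'\<in>{e \<in> gE G. gsrc G e = gsrc G e0}. \<Sum>p'\<in>{p \<in> PP L. relV V0 V1 (gsrc G e0) p0 p}. F (EE e' p'))"
    by (subst sum.cartesian_product) (rule sum.cong, auto)
  also have "\<dots> = (\<Sum>p'\<in>{p' \<in> PP L. relV V0 V1 (gsrc G e0) p0 p'}. \<Sum>e'\<in>{e \<in> gE G. gsrc G e = gsrc G e0}. F (EE e' p'))"
    by (rule sum.swap)
  finally show ?thesis .
qed

context
  fixes as bs :: "nat list" and M :: "nat \<times> nat \<Rightarrow> nat \<times> nat \<Rightarrow> real"
  assumes posA: "\<forall>a\<in>set as. 0 < a" and posB: "\<forall>a\<in>set bs. 0 < a"
    and cC: "condC V0 V1 as bs (\<lambda>X q. \<Sum>p\<in>PP as. M q p * X p)"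
    and cK: "condK V0 V1 as bs (\<lambda>X q. \<Sum>p\<in>PP as. M q p * X p)"
    and cI: "condI as bs (\<lambda>X q. \<Sum>p\<in>PP as. M q p * X p)"
begin

definition TR :: "(('e \<times> nat) \<times> nat \<Rightarrow> real \<Rightarrow> real) \<Rightarrow> ('e \<times> nat) \<times> nat \<Rightarrow> real \<Rightarrow> real" where
  "TR f x t = (\<Sum>p\<in>PP as. M (snd x, snd (fst x)) p * f (EE (fst (fst x)) p) t)"

lemma TR_EE: "TR f (EE e q) t = (\<Sum>p\<in>PP as. M q p * f (EE e p) t)"
  unfolding TR_def EE_def by simp

lemma cC':
  assumes "\<forall>p\<in>PP as. \<forall>p'\<in>PP as. relV V0 V1 u p p' \<longrightarrow> X p = X p'" "q \<in> PP bs" "q' \<in> PP bs" "relV V0 V1 u q q'"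
  shows "(\<Sum>p\<in>PP as. M q p * X p) = (\<Sum>p\<in>PP as. M q' p * X p)"
  using cC[unfolded condC_def, THEN spec[of _ u], THEN spec[of _ X], THEN mp, OF assms(1)] assms(2-4) by blast

lemma cK':
  assumes "\<forall>p\<in>PP as. (\<Sum>p'\<in>{p' \<in> PP as. relV V0 V1 u p p'}. Y p') = 0" "q \<in> PP bs"
  shows "(\<Sum>q'\<in>{q' \<in> PP bs. relV V0 V1 u q q'}. \<Sum>p\<in>PP as. M q' p * Y p) = 0"
  using cK[unfolded condK_def, THEN spec[of _ u], THEN spec[of _ Y], THEN mp, OF assms(1)] assms(2) by blast

lemma cI':
  assumes "\<forall>q\<in>PP bs. (\<Sum>p\<in>PP as. M q p * X p) = 0" "p \<in> PP as"
  shows "X p = 0"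
  using cI[unfolded condI_def, THEN spec[of _ X], THEN mp, OF assms(1)] assms(2) by blast

lemma eig_transfer:
  assumes eig: "kirchhoff_eigenfun (frame_union_contr G V0 V1 as) lam f"
  shows "kirchhoff_eigenfun (frame_union_contr G V0 V1 bs) lam (TR f)"
proof -
  let ?A = "frame_union_contr G V0 V1 as"
  let ?B = "frame_union_contr G V0 V1 bs"
  note E = eig[unfolded kirchhoff_eigenfun_def]
  have invA: "\<forall>x\<in>gE ?A. \<forall>t\<in>{0..1}. f (ginv ?A x) t = f x (1 - t)"
    by (rule conjunct1[OF E])
  from conjunct1[OF conjunct2[OF E]] obtain \<phi> where
    \<phi>: "\<forall>x\<in>gE ?A. f x 0 = \<phi> (gsrc ?A x) \<and> f x 1 = \<phi> (gtgt ?A x)" ..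
  from conjunct2[OF conjunct2[OF E]] obtain f1 f2 where
    DK: "(\<forall>e\<in>gE ?A. \<forall>t\<in>{0..1}.
            (f e has_real_derivative f1 e t) (at t within {0..1}) \<and>
            (f1 e has_real_derivative f2 e t) (at t within {0..1}) \<and>
            - f2 e t = lam * f e t) \<and>
     (\<forall>v\<in>gV ?A. (\<Sum>e\<in>{e\<in>gE ?A. gsrc ?A e = v}. f1 e 0) = 0)"
    by (elim exE)
  note der = conjunct1[OF DK] and kir = conjunct2[OF DK]
  have EA: "EE e p \<in> gE ?A" if "e \<in> gE G" "p \<in> PP as" for e p
    using that unfolding gE_FC[OF dg V0 V1] by auto
  have EB: "x \<in> gE ?B \<longleftrightarrow> (\<exists>e q. x = EE e q \<and> e \<in> gE G \<and> q \<in> PP bs)" for x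
    unfolding gE_FC[OF dg V0 V1] by auto
  have ginvG: "ginv G e \<in> gE G" if "e \<in> gE G" for e using dg that unfolding is_dgraph_def by auto
  have invB: "\<forall>x\<in>gE ?B. \<forall>t\<in>{0..1}. TR f (ginv ?B x) t = TR f x (1 - t)"
  proof (intro ballI)
    fix x t assume x: "x \<in> gE ?B" and t: "t \<in> {0..(1::real)}"
    obtain e q where xq: "x = EE e q" "e \<in> gE G" "q \<in> PP bs" using x EB by auto
    have "TR f (ginv ?B x) t = (\<Sum>p\<in>PP as. M q p * f (EE (ginv G e) p) t)"
      unfolding xq inv_FC[OF dg V0 V1] TR_EE ..
    also have "\<dots> = (\<Sum>p\<in>PP as. M q p * f (EE e p) (1 - t))"
      apply (rule sum.cong[OF refl])
      subgoal for p using invA[rule_format, OF EA[OF xq(2), of p] t] by (simp add: inv_FC[OF dg V0 V1])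
      done
    finally show "TR f (ginv ?B x) t = TR f x (1 - t)" unfolding xq TR_EE .
  qed
  have cont: "TR f x 0 = TR f y 0" if x: "x \<in> gE ?B" and y: "y \<in> gE ?B" and s: "gsrc ?B x = gsrc ?B y" for x y
  proof -
    obtain e q where xq: "x = EE e q" "e \<in> gE G" "q \<in> PP bs" using x EB by auto
    obtain e' q' where yq: "y = EE e' q'" "e' \<in> gE G" "q' \<in> PP bs" using y EB by auto
    have ss: "gsrc G e = gsrc G e'" and r: "relV V0 V1 (gsrc G e) q q'"
      using s src_FC_eq[OF dg V0 V1 posB xq(2) yq(2) xq(3) yq(3)] unfolding xq yq by auto
    define X where "X = (\<lambda>p. f (EE e p) 0)"
    have srcA: "gsrc ?A (EE e p) = gsrc ?A (EE e2 p')" if "e2 \<in> gE G" "gsrc G e2 = gsrc G e" "p \<in> PP as" "p' \<in> PP as"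
       "relV V0 V1 (gsrc G e) p p'" for e2 p p'
      using src_FC_eq[OF dg V0 V1 posA xq(2) that(1) that(3) that(4)] that by auto
    have XC: "\<forall>p\<in>PP as. \<forall>p'\<in>PP as. relV V0 V1 (gsrc G e) p p' \<longrightarrow> X p = X p'"
    proof (intro ballI impI)
      fix p p' assume p: "p \<in> PP as" "p' \<in> PP as" and r: "relV V0 V1 (gsrc G e) p p'"
      have "X p = \<phi> (gsrc ?A (EE e p))" unfolding X_def using \<phi> EA[OF xq(2) p(1)] by blast
      also have "\<dots> = \<phi> (gsrc ?A (EE e p'))" using srcA[OF xq(2) refl p r] by simp
      also have "\<dots> = X p'" unfolding X_def using \<phi> EA[OF xq(2) p(2)] by simp
      finally show "X p = X p'" .
    qed
    have Xe': "f (EE e' p) 0 = X p" if p: "p \<in> PP as" for p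
    proof -
      have "f (EE e' p) 0 = \<phi> (gsrc ?A (EE e' p))" using \<phi> EA[OF yq(2) p] by blast
      also have "\<dots> = \<phi> (gsrc ?A (EE e p))" using srcA[OF yq(2) ss[symmetric] p p relV_refl] by simp
      also have "\<dots> = X p" unfolding X_def using \<phi> EA[OF xq(2) p] by simp
      finally show ?thesis .
    qed
    have "TR f x 0 = (\<Sum>p\<in>PP as. M q p * X p)" unfolding xq TR_EE X_def ..
    also have "\<dots> = (\<Sum>p\<in>PP as. M q' p * X p)"
      by (rule cC'[OF XC xq(3) yq(3) r])
    also have "\<dots> = TR f y 0" unfolding yq TR_EE by (rule sum.cong[OF refl]) (simp add: Xe')
    finally show ?thesis .
  qed
  have contB: "\<exists>\<phi> :: (((('v \<times> nat) set \<times> nat) set) \<Rightarrow> real). \<forall>x\<in>gE ?B. TR f x 0 = \<phi> (gsrc ?B x) \<and> TR f x 1 = \<phi> (gtgt ?B x)"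
    apply (rule cont_lemma[OF invB])
      apply (erule src_inv_FC(2)[OF dg V0 V1])
     apply (erule src_inv_FC(1)[OF dg V0 V1])
    apply (erule (2) cont)
    done
  have derB: "\<forall>x\<in>gE ?B. \<forall>t\<in>{0..1}.
            (TR f x has_real_derivative TR f1 x t) (at t within {0..1}) \<and>
            (TR f1 x has_real_derivative TR f2 x t) (at t within {0..1}) \<and>
            - TR f2 x t = lam * TR f x t"
  proof (intro ballI conjI)
    fix x t assume x: "x \<in> gE ?B" and t: "t \<in> {0..(1::real)}"
    obtain e q where xq: "x = EE e q" "e \<in> gE G" "q \<in> PP bs" using x EB by auto
    have d: "\<And>p. p \<in> PP as \<Longrightarrow> (f (EE e p) has_real_derivative f1 (EE e p) t) (at t within {0..1}) \<and>
            (f1 (EE e p) has_real_derivative f2 (EE e p) t) (at t within {0..1}) \<and>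
            - f2 (EE e p) t = lam * f (EE e p) t"
      using der EA[OF xq(2)] t by blast
    have TRf: "TR g x = (\<lambda>t. \<Sum>p\<in>PP as. M q p * g (EE e p) t)" for g
      unfolding xq by (rule ext) (rule TR_EE)
    show "(TR f x has_real_derivative TR f1 x t) (at t within {0..1})"
      unfolding TRf by (rule DERIV_sum, rule DERIV_cmult) (use d in blast)
    show "(TR f1 x has_real_derivative TR f2 x t) (at t within {0..1})"
      unfolding TRf by (rule DERIV_sum, rule DERIV_cmult) (use d in blast)
    have "- TR f2 x t = (\<Sum>p\<in>PP as. M q p * (- f2 (EE e p) t))" unfolding TRf by (simp add: sum_negf)
    also have "\<dots> = (\<Sum>p\<in>PP as. lam * (M q p * f (EE e p) t))"
      by (rule sum.cong[OF refl]) (simp add: d)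
    also have "\<dots> = lam * TR f x t" unfolding TRf by (simp add: sum_distrib_left)
    finally show "- TR f2 x t = lam * TR f x t" .
  qed
  have kirB: "\<forall>v\<in>gV ?B. (\<Sum>y\<in>{y\<in>gE ?B. gsrc ?B y = v}. TR f1 y 0) = 0"
  proof
    fix v assume v: "v \<in> gV ?B"
    show "(\<Sum>y\<in>{y\<in>gE ?B. gsrc ?B y = v}. TR f1 y 0) = 0"
    proof (cases "\<exists>x0\<in>gE ?B. gsrc ?B x0 = v")
      case False
      then have emp: "{y\<in>gE ?B. gsrc ?B y = v} = {}" by blast
      show ?thesis unfolding emp by simp
    next
      case True
      then obtain e0 q0 where x0: "e0 \<in> gE G" "q0 \<in> PP bs" "gsrc ?B (EE e0 q0) = v"
        using EB by auto
      define u where "u = gsrc G e0"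
      define S1 where "S1 = {e \<in> gE G. gsrc G e = gsrc G e0}"
      define Y where "Y = (\<lambda>p. \<Sum>e'\<in>S1. f1 (EE e' p) 0)"
      have "(\<Sum>y\<in>{y\<in>gE ?B. gsrc ?B y = v}. TR f1 y 0)
          = (\<Sum>q'\<in>{q' \<in> PP bs. relV V0 V1 u q0 q'}. \<Sum>e'\<in>S1. TR f1 (EE e' q') 0)"
        unfolding x0(3)[symmetric] u_def S1_def by (rule sum_src_class[OF posB x0(1,2)])
      also have "\<dots> = (\<Sum>q'\<in>{q' \<in> PP bs. relV V0 V1 u q0 q'}. \<Sum>p\<in>PP as. M q' p * Y p)"
        unfolding TR_EE Y_def
        by (rule sum.cong[OF refl], subst sum.swap) (simp add: sum_distrib_left)
      also have "\<dots> = 0"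
      proof -
        have "\<forall>p\<in>PP as. (\<Sum>p'\<in>{p' \<in> PP as. relV V0 V1 u p p'}. Y p') = 0"
        proof
          fix p assume p: "p \<in> PP as"
          have "(\<Sum>p'\<in>{p' \<in> PP as. relV V0 V1 u p p'}. Y p')
             = (\<Sum>y\<in>{y\<in>gE ?A. gsrc ?A y = gsrc ?A (EE e0 p)}. f1 y 0)"
            unfolding Y_def S1_def u_def by (rule sum_src_class[OF posA x0(1) p, symmetric])
          also have "\<dots> = 0" using kir src_FC_in[OF dg V0 V1 EA[OF x0(1) p]] by blast
          finally show "(\<Sum>p'\<in>{p' \<in> PP as. relV V0 V1 u p p'}. Y p') = 0" .
        qed
        then show ?thesis by (rule cK'[OF _ x0(2)])
      qed
      finally show ?thesis .
    qed
  qed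
  show ?thesis unfolding kirchhoff_eigenfun_def
    apply (intro conjI)
      apply (rule invB)
     apply (rule contB)
    apply (rule exI[of _ "TR f1"], rule exI[of _ "TR f2"])
    apply (rule conjI[OF derB kirB])
    done
qed

lemma mult_transfer:
  assumes "kirchhoff_mult_ge (frame_union_contr G V0 V1 as) lam n"
  shows "kirchhoff_mult_ge (frame_union_contr G V0 V1 bs) lam n"
proof -
  let ?A = "frame_union_contr G V0 V1 as"
  let ?B = "frame_union_contr G V0 V1 bs"
  obtain fs where eig: "\<forall>i<n. kirchhoff_eigenfun ?A lam (fs i)"
    and ind: "\<forall>c :: nat \<Rightarrow> real. (\<forall>e\<in>gE ?A. \<forall>t\<in>{0..1}. (\<Sum>i<n. c i * fs i e t) = 0) \<longrightarrow> (\<forall>i<n. c i = 0)"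
    using assms unfolding kirchhoff_mult_ge_def by blast
  have EA: "EE e p \<in> gE ?A \<longleftrightarrow> e \<in> gE G \<and> p \<in> PP as" for e p
    unfolding gE_FC[OF dg V0 V1] by auto
  have EB: "x \<in> gE ?B \<longleftrightarrow> (\<exists>e q. x = EE e q \<and> e \<in> gE G \<and> q \<in> PP bs)" for x
    unfolding gE_FC[OF dg V0 V1] by auto
  have EA2: "x \<in> gE ?A \<longleftrightarrow> (\<exists>e q. x = EE e q \<and> e \<in> gE G \<and> q \<in> PP as)" for x
    unfolding gE_FC[OF dg V0 V1] by auto
  show ?thesis unfolding kirchhoff_mult_ge_def
  proof (rule exI[of _ "\<lambda>i. TR (fs i)"], intro conjI allI impI)
    fix i assume "i < n"
    then show "kirchhoff_eigenfun ?B lam (TR (fs i))" using eig eig_transfer by blast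
  next
    fix c :: "nat \<Rightarrow> real" and i
    assume z: "\<forall>e\<in>gE ?B. \<forall>t\<in>{0..1}. (\<Sum>i<n. c i * TR (fs i) e t) = 0" and i: "i < n"
    have "\<forall>x\<in>gE ?A. \<forall>t\<in>{0..1}. (\<Sum>i<n. c i * fs i x t) = 0"
    proof (intro ballI)
      fix x t assume x: "x \<in> gE ?A" and t: "t \<in> {0..(1::real)}"
      obtain e p where xp: "x = EE e p" "e \<in> gE G" "p \<in> PP as" using x EA2 by auto
      define Z where "Z = (\<lambda>p. \<Sum>i<n. c i * fs i (EE e p) t)"
      have "\<forall>q\<in>PP bs. (\<Sum>p\<in>PP as. M q p * Z p) = 0"
      proof
        fix q assume q: "q \<in> PP bs"
        have "(\<Sum>p\<in>PP as. M q p * Z p) = (\<Sum>i<n. c i * TR (fs i) (EE e q) t)"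
          unfolding Z_def TR_EE sum_distrib_left
          by (subst sum.swap) (simp add: algebra_simps)
        also have "\<dots> = 0" using z t EB xp(2) q by blast
        finally show "(\<Sum>p\<in>PP as. M q p * Z p) = 0" .
      qed
      then have "\<forall>p\<in>PP as. Z p = 0" using cI' by blast
      then show "(\<Sum>i<n. c i * fs i x t) = 0" using xp unfolding Z_def by simp
    qed
    then show "c i = 0" using ind i by blast
  qed
qed

end

end


lemma mset_sum_split:
  fixes Mx :: "nat multiset" and g :: "nat \<Rightarrow> nat"
  assumes lo: "\<And>a. a < m \<Longrightarrow> g a = 0"
  shows "(\<Sum>a\<in>#Mx. g a) = (\<Sum>a\<in>#{#a \<in># Mx. m < a#}. g a) + count Mx m * g m"
proof (induct Mx)
  case empty
  then show ?case by simp
next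
  case (add x M)
  then show ?case
    by (cases "m < x"; cases "x = m") (auto simp: lo)
qed

lemma mset_diff:
  fixes Mx Nx :: "nat multiset" and h :: "nat \<Rightarrow> nat"
  assumes cm: "count Mx m \<noteq> count Nx m" and hi: "\<And>a. m < a \<Longrightarrow> count Mx a = count Nx a"
    and lo: "\<And>a. 0 < a \<Longrightarrow> a < m \<Longrightarrow> h a = 0" and hm: "h m > 0" and m: "m > 0"
  shows "(\<Sum>a\<in>#Mx. a * h a) \<noteq> (\<Sum>a\<in>#Nx. a * h a)"
proof -
  have lo': "a < m \<Longrightarrow> a * h a = 0" for a using lo[of a] by (cases "a = 0") auto
  have f: "{#a \<in># Mx. m < a#} = {#a \<in># Nx. m < a#}"
    by (rule multiset_eqI) (simp add: hi)
  have k: "m * h m > 0" using hm m by simp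
  have SM: "(\<Sum>a\<in>#Mx. a * h a) = (\<Sum>a\<in>#{#a \<in># Mx. m < a#}. a * h a) + count Mx m * (m * h m)"
    by (rule mset_sum_split[OF lo'])
  have SN: "(\<Sum>a\<in>#Nx. a * h a) = (\<Sum>a\<in>#{#a \<in># Nx. m < a#}. a * h a) + count Nx m * (m * h m)"
    by (rule mset_sum_split[OF lo'])
  show ?thesis unfolding SM SN f using cm k by simp
qed


definition dg_deg :: "('v, 'e) dgraph \<Rightarrow> 'v \<Rightarrow> nat" where
  "dg_deg H v = card {x \<in> gE H. gsrc H x = v}"

definition Qc :: "('v, 'e) dgraph \<Rightarrow> nat \<Rightarrow> nat" where
  "Qc H D = card {x \<in> gE H. dg_deg H (gsrc H x) = D}"

lemma iso_Q:
  assumes iso: "metric_graph_iso H1 H2"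
    and s1: "\<forall>x\<in>gE H1. gsrc H1 x \<in> gV H1"
  shows "Qc H1 D = Qc H2 D"
proof -
  obtain \<phi> \<psi> where \<phi>: "bij_betw \<phi> (gV H1) (gV H2)" and \<psi>: "bij_betw \<psi> (gE H1) (gE H2)"
    and hom: "\<forall>e\<in>gE H1. gsrc H2 (\<psi> e) = \<phi> (gsrc H1 e)"
    using iso unfolding metric_graph_iso_def by blast
  have injpsi: "inj_on \<psi> (gE H1)" and imgpsi: "\<psi> ` gE H1 = gE H2" using \<psi> unfolding bij_betw_def by auto
  have injphi: "inj_on \<phi> (gV H1)" using \<phi> unfolding bij_betw_def by auto
  have degeq: "dg_deg H2 (\<phi> v) = dg_deg H1 v" if v: "v \<in> gV H1" for v
  proof -
    have "{y \<in> gE H2. gsrc H2 y = \<phi> v} = \<psi> ` {x \<in> gE H1. gsrc H1 x = v}"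
    proof (intro equalityI subsetI)
      fix y assume y: "y \<in> {y \<in> gE H2. gsrc H2 y = \<phi> v}"
      then obtain x where x: "x \<in> gE H1" "y = \<psi> x" using imgpsi by auto
      have "\<phi> (gsrc H1 x) = \<phi> v" using y x hom by auto
      then have "gsrc H1 x = v" using injphi s1 x(1) v unfolding inj_on_def by blast
      then show "y \<in> \<psi> ` {x \<in> gE H1. gsrc H1 x = v}" using x by auto
    next
      fix y assume "y \<in> \<psi> ` {x \<in> gE H1. gsrc H1 x = v}"
      then obtain x where x: "x \<in> gE H1" "gsrc H1 x = v" "y = \<psi> x" by auto
      then show "y \<in> {y \<in> gE H2. gsrc H2 y = \<phi> v}" using imgpsi hom by auto
    qed
    then show ?thesis unfolding dg_deg_def
      by (simp add: card_image inj_on_subset[OF injpsi])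
  qed
  have "{y \<in> gE H2. dg_deg H2 (gsrc H2 y) = D} = \<psi> ` {x \<in> gE H1. dg_deg H1 (gsrc H1 x) = D}"
  proof (intro equalityI subsetI)
    fix y assume y: "y \<in> {y \<in> gE H2. dg_deg H2 (gsrc H2 y) = D}"
    then obtain x where x: "x \<in> gE H1" "y = \<psi> x" using imgpsi by auto
    have "dg_deg H1 (gsrc H1 x) = D" using y x hom degeq s1 by auto
    then show "y \<in> \<psi> ` {x \<in> gE H1. dg_deg H1 (gsrc H1 x) = D}" using x by auto
  next
    fix y assume "y \<in> \<psi> ` {x \<in> gE H1. dg_deg H1 (gsrc H1 x) = D}"
    then obtain x where x: "x \<in> gE H1" "dg_deg H1 (gsrc H1 x) = D" "y = \<psi> x" by auto
    then show "y \<in> {y \<in> gE H2. dg_deg H2 (gsrc H2 y) = D}" using imgpsi hom degeq s1 by auto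
  qed
  then show ?thesis unfolding Qc_def
    by (simp add: card_image inj_on_subset[OF injpsi])
qed

lemma image_filter: "{x \<in> f ` S. P x} = f ` {y \<in> S. P (f y)}"
  by auto

lemma card_filter_sum: "finite A \<Longrightarrow> card {x \<in> A. P x} = (\<Sum>x\<in>A. if P x then 1 else 0)"
  by (simp add: sum.If_cases Int_def)

context
  fixes G :: "('v, 'e) dgraph" and V0 V1 :: "'v set"
  assumes dg: "is_dgraph G" and V0: "V0 \<subseteq> gV G" and V1: "V1 \<subseteq> V0"
begin

definition wt :: "nat \<Rightarrow> 'v \<Rightarrow> nat \<Rightarrow> nat" where
  "wt r u a = (if u \<in> V1 then r else if u \<in> V0 then a else 1)"

lemma finE: "finite (gE G)" using dg unfolding is_dgraph_def by auto

lemma deg_EE: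
  assumes pos: "\<forall>a\<in>set L. 0 < a" and e: "e \<in> gE G" and p: "p \<in> PP L"
  shows "dg_deg (frame_union_contr G V0 V1 L) (gsrc (frame_union_contr G V0 V1 L) (EE e p))
       = dg_deg G (gsrc G e) * wt (sum_list L) (gsrc G e) (L ! (fst p - 1))"
proof -
  define u where "u = gsrc G e"
  have inj: "inj_on (\<lambda>(e, p). EE e p) X" for X by (auto simp: inj_on_def)
  have "dg_deg (frame_union_contr G V0 V1 L) (gsrc (frame_union_contr G V0 V1 L) (EE e p))
     = card ({e' \<in> gE G. gsrc G e' = u} \<times> {p' \<in> PP L. relV V0 V1 u p p'})"
    unfolding dg_deg_def src_class_FC[OF dg V0 V1 pos e p] u_def by (rule card_image[OF inj])
  also have "\<dots> = dg_deg G u * card {p' \<in> PP L. relV V0 V1 u p p'}"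
    by (simp add: card_cartesian_product dg_deg_def)
  also have "card {p' \<in> PP L. relV V0 V1 u p p'} = wt (sum_list L) u (L ! (fst p - 1))"
  proof (cases "u \<in> V1")
    case True
    then have "{p' \<in> PP L. relV V0 V1 u p p'} = PP L" by (auto simp: relV_def)
    then show ?thesis using True by (simp add: wt_def card_PP)
  next
    case nV1: False
    show ?thesis
    proof (cases "u \<in> V0")
      case True
      have l: "fst p \<in> {1..length L}" using p unfolding PP_def by auto
      have "{p' \<in> PP L. relV V0 V1 u p p'} = {p' \<in> PP L. fst p' = fst p}"
        using True nV1 by (auto simp: relV_def)
      then have "card {p' \<in> PP L. relV V0 V1 u p p'} = (\<Sum>p'\<in>{p' \<in> PP L. fst p' = fst p}. 1)"
        by simp
      also have "\<dots> = L ! (fst p - 1)" unfolding sum_block[OF l] by simp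
      finally show ?thesis using True nV1 by (simp add: wt_def)
    next
      case False
      then have "{p' \<in> PP L. relV V0 V1 u p p'} = {p}" using nV1 p by (auto simp: relV_def)
      then show ?thesis using False nV1 by (simp add: wt_def)
    qed
  qed
  finally show ?thesis unfolding u_def .
qed

definition hD :: "nat \<Rightarrow> nat \<Rightarrow> nat" where
  "hD D a = card {e \<in> gE G. gsrc G e \<in> V0 - V1 \<and> dg_deg G (gsrc G e) * a = D}"

definition c0 :: "nat \<Rightarrow> nat \<Rightarrow> nat" where
  "c0 r D = card {e \<in> gE G. gsrc G e \<notin> V0 - V1 \<and> dg_deg G (gsrc G e) * wt r (gsrc G e) 0 = D}"

lemma F_split: "card {e \<in> gE G. dg_deg G (gsrc G e) * wt r (gsrc G e) a = D} = hD D a + c0 r D"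
proof -
  have "{e \<in> gE G. dg_deg G (gsrc G e) * wt r (gsrc G e) a = D}
     = {e \<in> gE G. gsrc G e \<in> V0 - V1 \<and> dg_deg G (gsrc G e) * a = D}
       \<union> {e \<in> gE G. gsrc G e \<notin> V0 - V1 \<and> dg_deg G (gsrc G e) * wt r (gsrc G e) 0 = D}"
    unfolding wt_def using V1 by auto
  then show ?thesis unfolding hD_def c0_def
    by (simp add: card_Un_disjoint finE disjoint_iff)
qed

lemma sum_list_split: "sum_list (map (\<lambda>a. a * (h a + c)) L) = sum_list (map (\<lambda>a. a * h a) L) + c * sum_list L"
  for h :: "nat \<Rightarrow> nat" by (induct L) (auto simp: algebra_simps)

lemma Q_formula:
  assumes pos: "\<forall>a\<in>set L. 0 < a"
  shows "Qc (frame_union_contr G V0 V1 L) D = sum_list (map (\<lambda>a. a * hD D a) L) + c0 (sum_list L) D * sum_list L"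
proof -
  let ?F = "frame_union_contr G V0 V1 L"
  define r where "r = sum_list L"
  define F where "F = (\<lambda>a. card {e \<in> gE G. dg_deg G (gsrc G e) * wt r (gsrc G e) a = D})"
  have inj: "inj_on (\<lambda>(e, p). EE e p) X" for X by (auto simp: inj_on_def)
  have "{x \<in> gE ?F. dg_deg ?F (gsrc ?F x) = D}
     = (\<lambda>(e, p). EE e p) ` {y \<in> gE G \<times> PP L. dg_deg ?F (gsrc ?F ((\<lambda>(e, p). EE e p) y)) = D}"
    unfolding gE_FC[OF dg V0 V1] by (rule image_filter)
  then have "Qc ?F D = card {y \<in> gE G \<times> PP L. dg_deg ?F (gsrc ?F ((\<lambda>(e, p). EE e p) y)) = D}"
    unfolding Qc_def by (simp add: card_image[OF inj])
  also have "\<dots> = card {y \<in> gE G \<times> PP L. dg_deg G (gsrc G (fst y)) * wt r (gsrc G (fst y)) (L ! (fst (snd y) - 1)) = D}"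
    by (rule arg_cong[where f=card], rule Collect_cong) (auto simp: deg_EE[OF pos] r_def)
  also have "\<dots> = (\<Sum>y\<in>gE G \<times> PP L. if dg_deg G (gsrc G (fst y)) * wt r (gsrc G (fst y)) (L ! (fst (snd y) - 1)) = D then 1 else 0)"
    by (rule card_filter_sum) (simp add: finE)
  also have "\<dots> = (\<Sum>e\<in>gE G. \<Sum>p\<in>PP L. if dg_deg G (gsrc G e) * wt r (gsrc G e) (L ! (fst p - 1)) = D then 1 else 0)"
    by (subst sum.cartesian_product) (rule sum.cong, auto)
  also have "\<dots> = (\<Sum>p\<in>PP L. \<Sum>e\<in>gE G. if dg_deg G (gsrc G e) * wt r (gsrc G e) (L ! (fst p - 1)) = D then 1 else 0)"
    by (rule sum.swap)
  also have "\<dots> = (\<Sum>p\<in>PP L. F (L ! (fst p - 1)))"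
    unfolding F_def by (rule sum.cong[OF refl], rule card_filter_sum[symmetric]) (simp add: finE)
  also have "\<dots> = (\<Sum>i\<in>{1..length L}. \<Sum>j\<in>{1..L ! (i - 1)}. F (L ! (i - 1)))"
    unfolding sum_PP by simp
  also have "\<dots> = (\<Sum>i\<in>{1..length L}. (\<lambda>a. a * F a) (L ! (i - 1)))" by simp
  also have "\<dots> = sum_list (map (\<lambda>a. a * F a) L)" by (rule sum_list_nth)
  also have "\<dots> = sum_list (map (\<lambda>a. a * (hD D a + c0 r D)) L)"
    unfolding F_def F_split ..
  also have "\<dots> = sum_list (map (\<lambda>a. a * hD D a) L) + c0 r D * sum_list L"
    by (rule sum_list_split)
  finally show ?thesis unfolding r_def .
qed

end


lemma sum_list_mset: "sum_list (map f xs) = (\<Sum>a\<in>#mset xs. f a)"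
  by (induct xs) auto

theorem corollary5p9:
  fixes G :: "('v, 'e) dgraph" and V0 V1 :: "'v set" and r s :: nat and as bs :: "nat list"
  assumes "is_dgraph G"
    and "V0 \<subseteq> gV G"
    and "V1 \<subset> V0"
    and "r \<ge> 4"
    and "is_s_partition s r as" and "is_s_partition s r bs"
    and "mset as \<noteq> mset bs"
  shows "metric_isospectral (frame_union_contr G V0 V1 as) (frame_union_contr G V0 V1 bs) \<and>
         \<not> metric_graph_iso (frame_union_contr G V0 V1 as) (frame_union_contr G V0 V1 bs)"
proof -
  note dg = assms(1) and V0 = assms(2)
  have V1: "V1 \<subseteq> V0" using assms(3) by auto
  have lenA: "length as = s" and sumA: "sum_list as = r" and posA: "\<forall>a\<in>set as. 0 < a"
    using assms(5) unfolding is_s_partition_def by auto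
  have lenB: "length bs = s" and sumB: "sum_list bs = r" and posB: "\<forall>a\<in>set bs. 0 < a"
    using assms(6) unfolding is_s_partition_def by auto
  have rpos: "sum_list as > 0" "sum_list bs > 0" using sumA sumB assms(4) by auto
  let ?A = "frame_union_contr G V0 V1 as"
  let ?B = "frame_union_contr G V0 V1 bs"
  have cNN: "card (NN as) = card (NN bs)" using card_NN[OF posA] card_NN[OF posB] lenA lenB sumA sumB by simp
  have fNN: "finite (NN as)" "finite (NN bs)"
    using finite_subset[OF NN_sub finite_PP] by auto
  obtain \<sigma>1 where \<sigma>1: "bij_betw \<sigma>1 (NN bs) (NN as)" using finite_same_card_bij[OF fNN(2) fNN(1)] cNN by auto
  obtain \<sigma>2 where \<sigma>2: "bij_betw \<sigma>2 (NN as) (NN bs)" using finite_same_card_bij[OF fNN(1) fNN(2)] cNN by auto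
  obtain M1 where M1: "condC V0 V1 as bs (\<lambda>X q. \<Sum>p\<in>PP as. M1 q p * X p)"
      "condK V0 V1 as bs (\<lambda>X q. \<Sum>p\<in>PP as. M1 q p * X p)" "condI as bs (\<lambda>X q. \<Sum>p\<in>PP as. M1 q p * X p)"
    using exists_M[of bs as \<sigma>1 V0 V1] lenA lenB sumA sumB posA posB rpos \<sigma>1 by auto
  obtain M2 where M2: "condC V0 V1 bs as (\<lambda>X q. \<Sum>p\<in>PP bs. M2 q p * X p)"
      "condK V0 V1 bs as (\<lambda>X q. \<Sum>p\<in>PP bs. M2 q p * X p)" "condI bs as (\<lambda>X q. \<Sum>p\<in>PP bs. M2 q p * X p)"
    using exists_M[of as bs \<sigma>2 V0 V1] lenA lenB sumA sumB posA posB rpos \<sigma>2 by auto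
  have iso: "metric_isospectral ?A ?B"
    unfolding metric_isospectral_def
    using mult_transfer[OF dg V0 V1 posA posB M1] mult_transfer[OF dg V0 V1 posB posA M2] by blast
  have niso: "\<not> metric_graph_iso ?A ?B"
  proof
    assume I: "metric_graph_iso ?A ?B"
    have QE: "Qc ?A D = Qc ?B D" for D
      by (rule iso_Q[OF I]) (use src_FC_in[OF dg V0 V1] in blast)
    have SE: "(\<Sum>a\<in>#mset as. a * hD G V0 V1 D a) = (\<Sum>a\<in>#mset bs. a * hD G V0 V1 D a)" for D
      using QE[of D] Q_formula[OF dg V0 V1 posA, of D] Q_formula[OF dg V0 V1 posB, of D] sumA sumB
      by (simp add: sum_list_mset)
    define S where "S = {a. count (mset as) a \<noteq> count (mset bs) a}"
    have Ssub: "S \<subseteq> set as \<union> set bs"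
    proof
      fix x assume xS: "x \<in> S"
      show "x \<in> set as \<union> set bs"
      proof (rule ccontr)
        assume "x \<notin> set as \<union> set bs"
        then have "count (mset as) x = 0" "count (mset bs) x = 0" by (simp_all add: count_eq_zero_iff)
        with xS show False by (simp add: S_def)
      qed
    qed
    then have Sfin: "finite S" by (rule finite_subset) auto
    have Sne: "S \<noteq> {}"
    proof
      assume "S = {}"
      then have "mset as = mset bs" by (intro multiset_eqI) (auto simp: S_def)
      then show False using assms(7) by simp
    qed
    define m where "m = Max S"
    have mS: "m \<in> S" unfolding m_def using Sfin Sne by (rule Max_in)
    have mpos: "m > 0" using mS Ssub posA posB by auto
    have hi: "count (mset as) a = count (mset bs) a" if "m < a" for a
    proof (rule ccontr)
      assume "count (mset as) a \<noteq> count (mset bs) a"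
      then have "a \<in> S" by (simp add: S_def)
      then have "a \<le> m" unfolding m_def using Sfin by simp
      then show False using that by simp
    qed
    define W where "W = V0 - V1"
    have Wne: "W \<noteq> {}" using assms(3) unfolding W_def by auto
    have Wfin: "finite W" unfolding W_def using V0 dg unfolding is_dgraph_def by (auto intro: finite_subset)
    define dmax where "dmax = Max (dg_deg G ` W)"
    have "dmax \<in> dg_deg G ` W" unfolding dmax_def by (rule Max_in) (use Wfin Wne in auto)
    then obtain vs where vs: "vs \<in> W" "dg_deg G vs = dmax" by auto
    have dle: "dg_deg G u \<le> dmax" if "u \<in> W" for u unfolding dmax_def using Wfin that by simp
    have finE: "finite (gE G)" using dg unfolding is_dgraph_def by auto
    obtain es where es: "es \<in> gE G" "gsrc G es = vs"
      using dg vs(1) V0 unfolding is_dgraph_def W_def by blast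
    have dpos: "dmax > 0"
    proof -
      have "{x \<in> gE G. gsrc G x = vs} \<noteq> {}" using es by auto
      then have "dg_deg G vs > 0" unfolding dg_deg_def using finE by (simp add: card_gt_0_iff)
      then show ?thesis using vs by simp
    qed
    define D where "D = m * dmax"
    have hm: "hD G V0 V1 D m > 0"
    proof -
      have "es \<in> {e \<in> gE G. gsrc G e \<in> V0 - V1 \<and> dg_deg G (gsrc G e) * m = D}"
        using es vs unfolding D_def W_def by auto
      then show ?thesis unfolding hD_def[OF dg V0 V1] using finE by (auto simp: card_gt_0_iff)
    qed
    have lo: "hD G V0 V1 D a = 0" if "0 < a" "a < m" for a
    proof -
      have "{e \<in> gE G. gsrc G e \<in> V0 - V1 \<and> dg_deg G (gsrc G e) * a = D} = {}"
      proof (rule ccontr)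
        assume "{e \<in> gE G. gsrc G e \<in> V0 - V1 \<and> dg_deg G (gsrc G e) * a = D} \<noteq> {}"
        then obtain e where e: "gsrc G e \<in> W" "dg_deg G (gsrc G e) * a = D" unfolding W_def by auto
        have "dg_deg G (gsrc G e) * a \<le> dmax * a" using dle[OF e(1)] by simp
        also have "\<dots> < dmax * m" using dpos that by simp
        finally show False using e(2) unfolding D_def by (simp add: mult.commute)
      qed
      then show ?thesis unfolding hD_def[OF dg V0 V1] by (simp only: card.empty)
    qed
    have "(\<Sum>a\<in>#mset as. a * hD G V0 V1 D a) \<noteq> (\<Sum>a\<in>#mset bs. a * hD G V0 V1 D a)"
      by (rule mset_diff[where Mx="mset as" and Nx="mset bs" and m=m and h="hD G V0 V1 D", OF _ hi lo hm mpos])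
        (use mS in \<open>simp add: S_def\<close>)
    then show False using SE by blast
  qed
  show ?thesis using iso niso by blast
qed


end
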